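(* Let $\{S_\lambda:\lambda\geq0\}$ and $\{T_\mu:\mu\geq0\}$ be strongly continuous semigroups of isometries on a Hilbert space $\mathcal{H}$ satisfying $S_\lambda T_\mu=e^{i\lambda\mu}T_\mu S_\lambda$ for all $\lambda,\mu\geq0$. Then there exist a Hilbert space $\mathcal{K}\supseteq\mathcal{H}$ and strongly continuous unitary groups $\{U_\lambda:\lambda\in\mathbb{R}\}$, $\{V_\mu:\mu\in\mathbb{R}\}$ on $\mathcal{K}$ satisfying $U_\lambda V_\mu=e^{i\lambda\mu}V_\mu U_\lambda$ for all real $\lambda,\mu$, such that $P_{\mathcal{H}}U_\lambda|_{\mathcal{H}}=S_\lambda$ and $P_{\mathcal{H}}V_\mu|_{\mathcal{H}}=T_\mu$ for all $\lambda,\mu\geq0$, where $P_{\mathcal{H}}$ is the orthogonal projection of $\mathcal{K}$ onto $\mathcal{H}$. *)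

theory Defs
  imports "HOL-Analysis.Analysis"
begin

text \<open>The distribution has no class of complex inner product spaces, so a complex
Hilbert space is represented explicitly by its carrier and operations.
Convention: the inner product is linear in the first argument.\<close>

record 'v chs =
  carrier :: "'v set"
  zero :: 'v
  add :: "'v \<Rightarrow> 'v \<Rightarrow> 'v"
  smult :: "complex \<Rightarrow> 'v \<Rightarrow> 'v"
  inner :: "'v \<Rightarrow> 'v \<Rightarrow> complex"

definition chs_sub :: "'v chs \<Rightarrow> 'v \<Rightarrow> 'v \<Rightarrow> 'v" where
  "chs_sub K x y = add K x (smult K (-1) y)"

definition chs_norm :: "'v chs \<Rightarrow> 'v \<Rightarrow> real" where
  "chs_norm K x = sqrt (Re (inner K x x))"

definition chs_dist :: "'v chs \<Rightarrow> 'v \<Rightarrow> 'v \<Rightarrow> real" where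
  "chs_dist K x y = chs_norm K (chs_sub K x y)"

definition complex_hilbert_space :: "'v chs \<Rightarrow> bool" where
  "complex_hilbert_space K \<longleftrightarrow>
     zero K \<in> carrier K
   \<and> (\<forall>x\<in>carrier K. \<forall>y\<in>carrier K. add K x y \<in> carrier K)
   \<and> (\<forall>c. \<forall>x\<in>carrier K. smult K c x \<in> carrier K)
   \<and> (\<forall>x\<in>carrier K. \<forall>y\<in>carrier K. \<forall>z\<in>carrier K. add K (add K x y) z = add K x (add K y z))
   \<and> (\<forall>x\<in>carrier K. \<forall>y\<in>carrier K. add K x y = add K y x)
   \<and> (\<forall>x\<in>carrier K. add K (zero K) x = x)
   \<and> (\<forall>x\<in>carrier K. \<exists>y\<in>carrier K. add K x y = zero K)
   \<and> (\<forall>c. \<forall>x\<in>carrier K. \<forall>y\<in>carrier K. smult K c (add K x y) = add K (smult K c x) (smult K c y))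
   \<and> (\<forall>a b. \<forall>x\<in>carrier K. smult K (a + b) x = add K (smult K a x) (smult K b x))
   \<and> (\<forall>a b. \<forall>x\<in>carrier K. smult K (a * b) x = smult K a (smult K b x))
   \<and> (\<forall>x\<in>carrier K. smult K 1 x = x)
   \<and> (\<forall>x\<in>carrier K. \<forall>y\<in>carrier K. \<forall>z\<in>carrier K. inner K (add K x y) z = inner K x z + inner K y z)
   \<and> (\<forall>c. \<forall>x\<in>carrier K. \<forall>y\<in>carrier K. inner K (smult K c x) y = c * inner K x y)
   \<and> (\<forall>x\<in>carrier K. \<forall>y\<in>carrier K. inner K x y = cnj (inner K y x))
   \<and> (\<forall>x\<in>carrier K. 0 \<le> Re (inner K x x))
   \<and> (\<forall>x\<in>carrier K. inner K x x = 0 \<longrightarrow> x = zero K)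
   \<and> (\<forall>X. (\<forall>n. X n \<in> carrier K) \<and>
          (\<forall>e>0. \<exists>N. \<forall>m\<ge>N. \<forall>n\<ge>N. chs_dist K (X m) (X n) < e)
        \<longrightarrow> (\<exists>L\<in>carrier K. (\<lambda>n. chs_dist K (X n) L) \<longlonglongrightarrow> 0))"

definition lin_op :: "'v chs \<Rightarrow> 'w chs \<Rightarrow> ('v \<Rightarrow> 'w) \<Rightarrow> bool" where
  "lin_op H K f \<longleftrightarrow>
     (\<forall>x\<in>carrier H. f x \<in> carrier K)
   \<and> (\<forall>x\<in>carrier H. \<forall>y\<in>carrier H. f (add H x y) = add K (f x) (f y))
   \<and> (\<forall>c. \<forall>x\<in>carrier H. f (smult H c x) = smult K c (f x))"

definition isometry :: "'v chs \<Rightarrow> 'w chs \<Rightarrow> ('v \<Rightarrow> 'w) \<Rightarrow> bool" where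
  "isometry H K f \<longleftrightarrow> lin_op H K f
     \<and> (\<forall>x\<in>carrier H. \<forall>y\<in>carrier H. inner K (f x) (f y) = inner H x y)"

definition unitary :: "'v chs \<Rightarrow> ('v \<Rightarrow> 'v) \<Rightarrow> bool" where
  "unitary K f \<longleftrightarrow> isometry K K f \<and> f ` carrier K = carrier K"

definition sc_isometry_semigroup :: "'v chs \<Rightarrow> (real \<Rightarrow> 'v \<Rightarrow> 'v) \<Rightarrow> bool" where
  "sc_isometry_semigroup H S \<longleftrightarrow>
     (\<forall>t\<ge>0. isometry H H (S t))
   \<and> (\<forall>x\<in>carrier H. S 0 x = x)
   \<and> (\<forall>s\<ge>0. \<forall>t\<ge>0. \<forall>x\<in>carrier H. S (s + t) x = S s (S t x))
   \<and> (\<forall>x\<in>carrier H. \<forall>t\<ge>0. ((\<lambda>s. chs_dist H (S s x) (S t x)) \<longlongrightarrow> 0) (at t within {0..}))"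

definition sc_unitary_group :: "'v chs \<Rightarrow> (real \<Rightarrow> 'v \<Rightarrow> 'v) \<Rightarrow> bool" where
  "sc_unitary_group K U \<longleftrightarrow>
     (\<forall>t. unitary K (U t))
   \<and> (\<forall>x\<in>carrier K. U 0 x = x)
   \<and> (\<forall>s t. \<forall>x\<in>carrier K. U (s + t) x = U s (U t x))
   \<and> (\<forall>x\<in>carrier K. \<forall>t. ((\<lambda>s. chs_dist K (U s x) (U t x)) \<longlongrightarrow> 0) (at t))"

definition orth_proj :: "'v chs \<Rightarrow> 'v set \<Rightarrow> 'v \<Rightarrow> 'v" where
  "orth_proj K M v = (THE w. w \<in> M \<and> (\<forall>m\<in>M. inner K (chs_sub K v w) m = 0))"

end

theory Submission
  imports Defs
begin

lemma cnj_real: "(z::complex) = cnj z \<Longrightarrow> z = complex_of_real (Re z)"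
proof -
  assume e: "z = cnj z"
  have "Im z = Im (cnj z)" using e by (rule arg_cong)
  then have "Im z = 0" by simp
  then show ?thesis by (simp add: complex_eq_iff)
qed

lemma mult_cnj_real: "c * cnj c = complex_of_real ((cmod c)^2)"
  by (rule complex_norm_square[symmetric])

lemma frac_lt1: "0 \<le> (t::real) \<Longrightarrow> t / (t + 1) < 1"
  by (simp add: divide_less_eq)

locale hilb =
  fixes X :: "'v chs"
  assumes hs: "complex_hilbert_space X"
begin

lemma zero_c[simp, intro]: "zero X \<in> carrier X"
  using hs unfolding complex_hilbert_space_def by (elim conjE) assumption
lemma ax_add_c: "\<forall>x\<in>carrier X. \<forall>y\<in>carrier X. add X x y \<in> carrier X"
  using hs unfolding complex_hilbert_space_def by (elim conjE) assumption
lemma add_c[simp, intro]: "x \<in> carrier X \<Longrightarrow> y \<in> carrier X \<Longrightarrow> add X x y \<in> carrier X"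
  using ax_add_c by simp
lemma ax_smult_c: "\<forall>c. \<forall>x\<in>carrier X. smult X c x \<in> carrier X"
  using hs unfolding complex_hilbert_space_def by (elim conjE) assumption
lemma smult_c[simp, intro]: "x \<in> carrier X \<Longrightarrow> smult X c x \<in> carrier X"
  using ax_smult_c by simp
lemma ax_add_assoc: "\<forall>x\<in>carrier X. \<forall>y\<in>carrier X. \<forall>z\<in>carrier X. add X (add X x y) z = add X x (add X y z)"
  using hs unfolding complex_hilbert_space_def by (elim conjE) assumption
lemma add_assoc: "x \<in> carrier X \<Longrightarrow> y \<in> carrier X \<Longrightarrow> z \<in> carrier X \<Longrightarrow>
   add X (add X x y) z = add X x (add X y z)"
  using ax_add_assoc by simp
lemma ax_add_comm: "\<forall>x\<in>carrier X. \<forall>y\<in>carrier X. add X x y = add X y x"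
  using hs unfolding complex_hilbert_space_def by (elim conjE) assumption
lemma add_comm: "x \<in> carrier X \<Longrightarrow> y \<in> carrier X \<Longrightarrow> add X x y = add X y x"
  using ax_add_comm by simp
lemma ax_add_zero_l: "\<forall>x\<in>carrier X. add X (zero X) x = x"
  using hs unfolding complex_hilbert_space_def by (elim conjE) assumption
lemma add_zero_l[simp]: "x \<in> carrier X \<Longrightarrow> add X (zero X) x = x"
  using ax_add_zero_l by simp
lemma ax_smult_add_r: "\<forall>c. \<forall>x\<in>carrier X. \<forall>y\<in>carrier X. smult X c (add X x y) = add X (smult X c x) (smult X c y)"
  using hs unfolding complex_hilbert_space_def by (elim conjE) assumption
lemma smult_add_r: "x \<in> carrier X \<Longrightarrow> y \<in> carrier X \<Longrightarrow>
   smult X c (add X x y) = add X (smult X c x) (smult X c y)"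
  using ax_smult_add_r by simp
lemma ax_smult_add_l: "\<forall>a b. \<forall>x\<in>carrier X. smult X (a + b) x = add X (smult X a x) (smult X b x)"
  using hs unfolding complex_hilbert_space_def by (elim conjE) assumption
lemma smult_add_l: "x \<in> carrier X \<Longrightarrow> smult X (a + b) x = add X (smult X a x) (smult X b x)"
  using ax_smult_add_l by simp
lemma ax_smult_smult: "\<forall>a b. \<forall>x\<in>carrier X. smult X (a * b) x = smult X a (smult X b x)"
  using hs unfolding complex_hilbert_space_def by (elim conjE) assumption
lemma smult_smult[simp]: "x \<in> carrier X \<Longrightarrow> smult X a (smult X b x) = smult X (a * b) x"
  using ax_smult_smult by simp
lemma ax_smult_one: "\<forall>x\<in>carrier X. smult X 1 x = x"
  using hs unfolding complex_hilbert_space_def by (elim conjE) assumption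
lemma smult_one[simp]: "x \<in> carrier X \<Longrightarrow> smult X 1 x = x"
  using ax_smult_one by simp
lemma ax_ip_add_l: "\<forall>x\<in>carrier X. \<forall>y\<in>carrier X. \<forall>z\<in>carrier X. inner X (add X x y) z = inner X x z + inner X y z"
  using hs unfolding complex_hilbert_space_def by (elim conjE) assumption
lemma ip_add_l[simp]: "x \<in> carrier X \<Longrightarrow> y \<in> carrier X \<Longrightarrow> z \<in> carrier X \<Longrightarrow>
   inner X (add X x y) z = inner X x z + inner X y z"
  using ax_ip_add_l by simp
lemma ax_ip_smult_l: "\<forall>c. \<forall>x\<in>carrier X. \<forall>y\<in>carrier X. inner X (smult X c x) y = c * inner X x y"
  using hs unfolding complex_hilbert_space_def by (elim conjE) assumption
lemma ip_smult_l[simp]: "x \<in> carrier X \<Longrightarrow> y \<in> carrier X \<Longrightarrow>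
   inner X (smult X c x) y = c * inner X x y"
  using ax_ip_smult_l by simp
lemma ax_ip_sym: "\<forall>x\<in>carrier X. \<forall>y\<in>carrier X. inner X x y = cnj (inner X y x)"
  using hs unfolding complex_hilbert_space_def by (elim conjE) assumption
lemma ip_sym: "x \<in> carrier X \<Longrightarrow> y \<in> carrier X \<Longrightarrow> inner X x y = cnj (inner X y x)"
  using ax_ip_sym by blast
lemma ax_ip_pos: "\<forall>x\<in>carrier X. 0 \<le> Re (inner X x x)"
  using hs unfolding complex_hilbert_space_def by (elim conjE) assumption
lemma ip_pos: "x \<in> carrier X \<Longrightarrow> 0 \<le> Re (inner X x x)"
  using ax_ip_pos by simp
lemma ax_ip_zero_imp: "\<forall>x\<in>carrier X. inner X x x = 0 \<longrightarrow> x = zero X"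
  using hs unfolding complex_hilbert_space_def by (elim conjE) assumption
lemma ip_zero_imp: "x \<in> carrier X \<Longrightarrow> inner X x x = 0 \<Longrightarrow> x = zero X"
  using ax_ip_zero_imp by simp
lemma ax_complete: "\<forall>Y. (\<forall>n. Y n \<in> carrier X) \<and>
          (\<forall>e>0. \<exists>N. \<forall>m\<ge>N. \<forall>n\<ge>N. chs_dist X (Y m) (Y n) < e)
        \<longrightarrow> (\<exists>L\<in>carrier X. (\<lambda>n. chs_dist X (Y n) L) \<longlonglongrightarrow> 0)"
  using hs unfolding complex_hilbert_space_def by (elim conjE) assumption
lemma complete: "(\<forall>n. Y n \<in> carrier X) \<Longrightarrow>
          (\<forall>e>0. \<exists>N. \<forall>m\<ge>N. \<forall>n\<ge>N. chs_dist X (Y m) (Y n) < e)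
        \<Longrightarrow> (\<exists>L\<in>carrier X. (\<lambda>n. chs_dist X (Y n) L) \<longlonglongrightarrow> 0)"
  using ax_complete by blast

lemma ip_add_r[simp]: assumes x: "x \<in> carrier X" and y: "y \<in> carrier X" and z: "z \<in> carrier X"
  shows "inner X x (add X y z) = inner X x y + inner X x z"
proof -
  have "inner X x (add X y z) = cnj (inner X (add X y z) x)" using x y z by (simp add: ip_sym[of x])
  also have "\<dots> = cnj (inner X y x) + cnj (inner X z x)" using x y z by simp
  also have "\<dots> = inner X x y + inner X x z" using x y z by (simp add: ip_sym[of x])
  finally show ?thesis .
qed
lemma ip_smult_r[simp]: assumes x: "x \<in> carrier X" and y: "y \<in> carrier X"
  shows "inner X x (smult X c y) = cnj c * inner X x y"
proof -
  have "inner X x (smult X c y) = cnj (inner X (smult X c y) x)" using x y by (simp add: ip_sym[of x])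
  also have "\<dots> = cnj c * cnj (inner X y x)" using x y by simp
  also have "\<dots> = cnj c * inner X x y" using x y by (simp add: ip_sym[of x])
  finally show ?thesis .
qed

lemma ip_zero_l[simp]: "y \<in> carrier X \<Longrightarrow> inner X (zero X) y = 0"
proof -
  assume y: "y \<in> carrier X"
  have "inner X (add X (zero X) (zero X)) y = inner X (zero X) y + inner X (zero X) y"
    using y by (rule ip_add_l[OF zero_c zero_c])
  moreover have "add X (zero X) (zero X) = zero X" by (rule add_zero_l[OF zero_c])
  ultimately have "inner X (zero X) y = inner X (zero X) y + inner X (zero X) y" by metis
  then show ?thesis by (metis add_cancel_right_right)
qed
lemma ip_zero_r[simp]: "y \<in> carrier X \<Longrightarrow> inner X y (zero X) = 0"
  using ip_sym[of y "zero X"] by simp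

lemma ip_self_real: "x \<in> carrier X \<Longrightarrow> inner X x x = complex_of_real (Re (inner X x x))"
  by (rule cnj_real[OF ip_sym])

lemma sub_c[simp, intro]: "x \<in> carrier X \<Longrightarrow> y \<in> carrier X \<Longrightarrow> chs_sub X x y \<in> carrier X"
  by (simp add: chs_sub_def)
lemma ip_sub_l[simp]: "x \<in> carrier X \<Longrightarrow> y \<in> carrier X \<Longrightarrow> z \<in> carrier X \<Longrightarrow>
   inner X (chs_sub X x y) z = inner X x z - inner X y z"
  by (simp add: chs_sub_def)
lemma ip_sub_r[simp]: "x \<in> carrier X \<Longrightarrow> y \<in> carrier X \<Longrightarrow> z \<in> carrier X \<Longrightarrow>
   inner X z (chs_sub X x y) = inner X z x - inner X z y"
  by (simp add: chs_sub_def)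

lemma eq_zeroI: "x \<in> carrier X \<Longrightarrow> (\<And>z. z \<in> carrier X \<Longrightarrow> inner X x z = 0) \<Longrightarrow> x = zero X"
  using ip_zero_imp by blast

lemma eqI_ip: assumes x: "x \<in> carrier X" and y: "y \<in> carrier X"
  and h: "\<And>z. z \<in> carrier X \<Longrightarrow> inner X x z = inner X y z" shows "x = y"
proof -
  define d where "d = chs_sub X x y"
  have d: "d \<in> carrier X" using x y by (simp add: d_def)
  have d0: "d = zero X" by (rule eq_zeroI[OF d]) (simp add: d_def x y h)
  define w where "w = add X (smult X (-1) y) y"
  have w: "w \<in> carrier X" using y by (simp add: w_def)
  have w0: "w = zero X" by (rule eq_zeroI[OF w]) (simp add: w_def y)
  have "add X d y = add X x w" using x y by (simp add: d_def w_def chs_sub_def add_assoc)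
  also have "\<dots> = x" using x by (simp add: w0 add_comm[OF x])
  finally show ?thesis using d0 y by simp
qed

lemma sub_zero_eq: assumes x: "x \<in> carrier X" and y: "y \<in> carrier X"
  and d: "chs_sub X x y = zero X" shows "x = y"
proof (rule eqI_ip[OF x y])
  fix z assume z: "z \<in> carrier X"
  have "inner X (chs_sub X x y) z = 0" using d z by simp
  then show "inner X x z = inner X y z" using x y z by simp
qed


lemma sub_def': "chs_sub X x y = add X x (smult X (-1) y)" by (simp add: chs_sub_def)

lemma smult_zero_l[simp]: "x \<in> carrier X \<Longrightarrow> smult X 0 x = zero X"
  by (rule eq_zeroI) auto
lemma smult_zero_r[simp]: "smult X c (zero X) = zero X"
  by (rule eq_zeroI) auto
lemma sub_self[simp]: "x \<in> carrier X \<Longrightarrow> chs_sub X x x = zero X"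
  by (rule eq_zeroI) auto
lemma add_zero_r[simp]: "x \<in> carrier X \<Longrightarrow> add X x (zero X) = x"
  by (rule eqI_ip) auto
lemma sub_zero_r[simp]: "x \<in> carrier X \<Longrightarrow> chs_sub X x (zero X) = x"
  by (rule eqI_ip) auto

abbreviation nrm where "nrm \<equiv> chs_norm X"

lemma nrm_ge0[simp]: "x \<in> carrier X \<Longrightarrow> 0 \<le> nrm x" by (simp add: chs_norm_def ip_pos)
lemma nrm_sq: assumes x: "x \<in> carrier X" shows "(nrm x)^2 = Re (inner X x x)"
  using ip_pos[OF x] by (simp add: chs_norm_def)
lemma ip_self: "x \<in> carrier X \<Longrightarrow> inner X x x = complex_of_real ((nrm x)^2)"
  by (simp add: nrm_sq ip_self_real[symmetric])
lemma nrm_eqI: "x \<in> carrier X \<Longrightarrow> 0 \<le> r \<Longrightarrow> Re (inner X x x) = r^2 \<Longrightarrow> nrm x = r"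
  by (simp add: chs_norm_def)
lemma nrm_zero[simp]: "nrm (zero X) = 0" by (simp add: chs_norm_def)
lemma nrm_zero_iff: "x \<in> carrier X \<Longrightarrow> nrm x = 0 \<longleftrightarrow> x = zero X"
proof
  assume x: "x \<in> carrier X" and "nrm x = 0"
  then have "inner X x x = 0" by (simp add: ip_self)
  then show "x = zero X" using x ip_zero_imp by blast
qed simp

lemma nrm_smult: assumes x: "x \<in> carrier X" shows "nrm (smult X c x) = cmod c * nrm x"
proof (rule nrm_eqI)
  have "inner X (smult X c x) (smult X c x) = (c * cnj c) * inner X x x" using x by simp
  also have "\<dots> = complex_of_real ((cmod c)^2 * (nrm x)^2)"
    using x by (simp only: ip_self mult_cnj_real of_real_mult)
  finally show "Re (inner X (smult X c x) (smult X c x)) = (cmod c * nrm x)^2"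
    by (simp add: power_mult_distrib)
qed (use x in auto)

lemma CS: assumes x: "x \<in> carrier X" and y: "y \<in> carrier X"
  shows "cmod (inner X x y) \<le> nrm x * nrm y"
proof (cases "y = zero X")
  case True then show ?thesis using x by simp
next
  case False
  define r where "r = (nrm y)^2"
  have yy: "inner X y y = complex_of_real r" using y by (simp add: ip_self r_def)
  have "r \<noteq> 0" using False y yy ip_zero_imp by fastforce
  then have r: "r > 0" unfolding r_def by simp
  define a where "a = inner X x y"
  define t where "t = a / complex_of_real r"
  define w where "w = add X x (smult X (-t) y)"
  have w: "w \<in> carrier X" using x y by (simp add: w_def)
  have yx: "inner X y x = cnj a" using x y by (simp add: a_def ip_sym[of y x])
  have "inner X w w = inner X x x + (- cnj t * a + - t * cnj a + t * cnj t * complex_of_real r)"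
    using x y by (simp add: w_def yx yy a_def[symmetric] algebra_simps)
  also have "- cnj t * a + - t * cnj a + t * cnj t * complex_of_real r = - complex_of_real ((cmod a)^2 / r)"
    using r unfolding t_def
    by (simp add: field_simps complex_norm_square[symmetric] power2_eq_square)
  finally have "Re (inner X w w) = (nrm x)^2 - (cmod a)^2 / r" using x by (simp add: nrm_sq)
  with ip_pos[OF w] have "(cmod a)^2 / r \<le> (nrm x)^2" by simp
  then have "(cmod a)^2 \<le> (nrm x)^2 * r" using r by (simp add: field_simps)
  also have "\<dots> = (nrm x * nrm y)^2" by (simp add: r_def power_mult_distrib)
  finally show ?thesis unfolding a_def
    by (rule power2_le_imp_le) (use x y in simp)
qed

lemma Re_ip_sym: "x \<in> carrier X \<Longrightarrow> y \<in> carrier X \<Longrightarrow> Re (inner X y x) = Re (inner X x y)"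
  by (subst ip_sym[of y x]) auto

lemma nrm_add: assumes x: "x \<in> carrier X" and y: "y \<in> carrier X"
  shows "nrm (add X x y) \<le> nrm x + nrm y"
proof (rule power2_le_imp_le)
  have "(nrm (add X x y))^2 = (nrm x)^2 + 2 * Re (inner X x y) + (nrm y)^2"
    using x y by (simp add: nrm_sq Re_ip_sym[of y x])
  also have "Re (inner X x y) \<le> nrm x * nrm y"
    using CS[OF x y] complex_Re_le_cmod order_trans by blast
  then have "(nrm x)^2 + 2 * Re (inner X x y) + (nrm y)^2 \<le> (nrm x + nrm y)^2"
    by (simp add: power2_sum)
  finally show "(nrm (add X x y))^2 \<le> (nrm x + nrm y)^2" .
qed (use x y in simp)

lemma sub_swap: "x \<in> carrier X \<Longrightarrow> y \<in> carrier X \<Longrightarrow> chs_sub X y x = smult X (-1) (chs_sub X x y)"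
proof -
  assume x: "x \<in> carrier X" and y: "y \<in> carrier X"
  show ?thesis
  proof (rule eqI_ip)
    fix z assume z: "z \<in> carrier X"
    have "inner X (smult X (-1) (chs_sub X x y)) z = - (inner X x z - inner X y z)"
      using x y z by simp
    then show "inner X (chs_sub X y x) z = inner X (smult X (-1) (chs_sub X x y)) z"
      using x y z by simp
  qed (use x y in auto)
qed

lemma nrm_sub_sym: "x \<in> carrier X \<Longrightarrow> y \<in> carrier X \<Longrightarrow> nrm (chs_sub X y x) = nrm (chs_sub X x y)"
  by (simp add: sub_swap[of x y] nrm_smult)

lemma dist_nrm: "chs_dist X x y = nrm (chs_sub X x y)" by (simp add: chs_dist_def)
lemma dist_ge0[simp]: "x \<in> carrier X \<Longrightarrow> y \<in> carrier X \<Longrightarrow> 0 \<le> chs_dist X x y" by (simp add: chs_dist_def)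
lemma dist_sym: "x \<in> carrier X \<Longrightarrow> y \<in> carrier X \<Longrightarrow> chs_dist X x y = chs_dist X y x"
  by (simp add: dist_nrm nrm_sub_sym)
lemma dist_self[simp]: "x \<in> carrier X \<Longrightarrow> chs_dist X x x = 0"
  by (simp add: dist_nrm)

lemma sub_add_sub: "x \<in> carrier X \<Longrightarrow> y \<in> carrier X \<Longrightarrow> z \<in> carrier X \<Longrightarrow>
   chs_sub X x z = add X (chs_sub X x y) (chs_sub X y z)"
  by (rule eqI_ip) auto

lemma dist_tri: "x \<in> carrier X \<Longrightarrow> y \<in> carrier X \<Longrightarrow> z \<in> carrier X \<Longrightarrow>
   chs_dist X x z \<le> chs_dist X x y + chs_dist X y z"
  by (simp add: dist_nrm sub_add_sub[of x y z] nrm_add)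

lemma nrm_le_dist: assumes x: "x \<in> carrier X" and y: "y \<in> carrier X"
  shows "nrm x \<le> nrm y + chs_dist X x y"
proof -
  have "x = add X y (chs_sub X x y)" using x y by (intro eqI_ip) auto
  then have "nrm x = nrm (add X y (chs_sub X x y))" by simp
  also have "\<dots> \<le> nrm y + chs_dist X x y" using x y by (simp add: nrm_add dist_nrm)
  finally show ?thesis .
qed

lemma nrm_diff_le: "x \<in> carrier X \<Longrightarrow> y \<in> carrier X \<Longrightarrow> \<bar>nrm x - nrm y\<bar> \<le> chs_dist X x y"
  using nrm_le_dist[of x y] nrm_le_dist[of y x] dist_sym[of x y] by linarith

lemma ip_cont: "x \<in> carrier X \<Longrightarrow> y \<in> carrier X \<Longrightarrow> z \<in> carrier X \<Longrightarrow>
   cmod (inner X x z - inner X y z) \<le> chs_dist X x y * nrm z"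
  using CS[of "chs_sub X x y" z] by (simp add: dist_nrm)

lemma sq_dist_expand: "x \<in> carrier X \<Longrightarrow> y \<in> carrier X \<Longrightarrow>
   (chs_dist X x y)^2 = (nrm x)^2 - 2 * Re (inner X x y) + (nrm y)^2"
  by (simp add: dist_nrm nrm_sq Re_ip_sym[of y x])



lemma parallelogram: "u \<in> carrier X \<Longrightarrow> v \<in> carrier X \<Longrightarrow>
  (nrm (add X u v))^2 + (nrm (chs_sub X u v))^2 = 2*(nrm u)^2 + 2*(nrm v)^2"
  by (simp add: nrm_sq)

end

lemma lin_c: "lin_op X Y A \<Longrightarrow> x \<in> carrier X \<Longrightarrow> A x \<in> carrier Y"
  by (simp add: lin_op_def)
lemma lin_add: "lin_op X Y A \<Longrightarrow> x \<in> carrier X \<Longrightarrow> y \<in> carrier X \<Longrightarrow> A (add X x y) = add Y (A x) (A y)"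
  by (simp add: lin_op_def)
lemma lin_smult: "lin_op X Y A \<Longrightarrow> x \<in> carrier X \<Longrightarrow> A (smult X c x) = smult Y c (A x)"
  by (simp add: lin_op_def)
lemma lin_sub: "hilb X \<Longrightarrow> lin_op X Y A \<Longrightarrow> x \<in> carrier X \<Longrightarrow> y \<in> carrier X \<Longrightarrow>
   A (chs_sub X x y) = chs_sub Y (A x) (A y)"
  by (simp add: chs_sub_def lin_add lin_smult hilb.smult_c)
lemma lin_zero: "hilb X \<Longrightarrow> hilb Y \<Longrightarrow> lin_op X Y A \<Longrightarrow> A (zero X) = zero Y"
proof -
  assume X: "hilb X" and Y: "hilb Y" and A: "lin_op X Y A"
  have "A (zero X) = A (smult X 0 (zero X))" using X by (simp add: hilb.smult_zero_r)
  also have "\<dots> = smult Y 0 (A (zero X))" using A X by (simp add: lin_smult hilb.zero_c)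
  also have "\<dots> = zero Y" using A X Y by (simp add: lin_c hilb.zero_c hilb.smult_zero_l)
  finally show ?thesis .
qed
lemma iso_lin: "isometry X Y A \<Longrightarrow> lin_op X Y A" by (simp add: isometry_def)
lemma iso_ip: "isometry X Y A \<Longrightarrow> x \<in> carrier X \<Longrightarrow> y \<in> carrier X \<Longrightarrow> inner Y (A x) (A y) = inner X x y"
  by (simp add: isometry_def)
lemma iso_nrm: "isometry X Y A \<Longrightarrow> x \<in> carrier X \<Longrightarrow> chs_norm Y (A x) = chs_norm X x"
  by (simp add: isometry_def chs_norm_def)
lemma iso_dist: "hilb X \<Longrightarrow> isometry X Y A \<Longrightarrow> x \<in> carrier X \<Longrightarrow> y \<in> carrier X \<Longrightarrow>
   chs_dist Y (A x) (A y) = chs_dist X x y"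
  by (simp add: chs_dist_def lin_sub[OF _ iso_lin, symmetric] iso_nrm hilb.sub_c)

context hilb begin

lemma adj_ex: assumes A: "isometry X X A" and y: "y \<in> carrier X"
  shows "\<exists>z\<in>carrier X. \<forall>x\<in>carrier X. inner X z x = inner X y (A x)"
proof -
  have hX: "hilb X" by (rule hilb_axioms)
  have Al: "lin_op X X A" using A by (rule iso_lin)
  have Ac: "\<And>x. x \<in> carrier X \<Longrightarrow> A x \<in> carrier X" using Al by (rule lin_c)
  define D where "D = {(nrm (chs_sub X y (A x)))^2 | x. x \<in> carrier X}"
  define d where "d = Inf D"
  have Dne: "D \<noteq> {}" unfolding D_def using zero_c by blast
  have Dbdd: "bdd_below D" unfolding D_def by (rule bdd_belowI[of _ 0]) auto
  have d_le: "\<And>x. x \<in> carrier X \<Longrightarrow> d \<le> (nrm (chs_sub X y (A x)))^2"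
    unfolding d_def by (rule cInf_lower[OF _ Dbdd]) (auto simp: D_def)
  have d0: "0 \<le> d" unfolding d_def by (rule cInf_greatest[OF Dne]) (auto simp: D_def)
  have "\<forall>n. \<exists>x. x \<in> carrier X \<and> (nrm (chs_sub X y (A x)))^2 < d + 1 / (Suc n)"
  proof
    fix n
    have "Inf D < d + 1 / Suc n" unfolding d_def by simp
    then obtain t where "t \<in> D" "t < d + 1 / Suc n" using cInf_lessD[OF Dne] by blast
    then show "\<exists>x. x \<in> carrier X \<and> (nrm (chs_sub X y (A x)))^2 < d + 1 / (Suc n)"
      unfolding D_def by blast
  qed
  then obtain xs where xs: "\<And>n. xs n \<in> carrier X"
    and xs_lt: "\<And>n. (nrm (chs_sub X y (A (xs n))))^2 < d + 1 / (Suc n)" by metis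
  have cauchy_sq: "(chs_dist X (xs m) (xs n))^2 \<le> 2 / Suc n + 2 / Suc m" for m n
  proof -
    define u where "u = chs_sub X y (A (xs n))"
    define v where "v = chs_sub X y (A (xs m))"
    define w where "w = smult X (1/2) (add X (xs n) (xs m))"
    have u: "u \<in> carrier X" and v: "v \<in> carrier X" and w: "w \<in> carrier X"
      using xs Ac y by (auto simp: u_def v_def w_def)
    have e1: "chs_sub X u v = A (chs_sub X (xs m) (xs n))"
      by (rule eqI_ip) (use xs Ac y in \<open>auto simp: u_def v_def lin_sub[OF hX Al]\<close>)
    have e2: "add X u v = smult X 2 (chs_sub X y (A w))"
    proof (rule eqI_ip)
      fix z assume z: "z \<in> carrier X"
      have Aw: "A w = smult X (1/2) (add X (A (xs n)) (A (xs m)))"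
        unfolding w_def using xs by (simp add: lin_smult[OF Al] lin_add[OF Al])
      show "inner X (add X u v) z = inner X (smult X 2 (chs_sub X y (A w))) z"
        using xs Ac y z by (simp add: u_def v_def Aw algebra_simps)
    qed (use u v y w Ac in auto)
    have "(nrm (add X u v))^2 = 4 * (nrm (chs_sub X y (A w)))^2"
      unfolding e2 using y w Ac by (simp add: nrm_smult power_mult_distrib)
    moreover have "d \<le> (nrm (chs_sub X y (A w)))^2" by (rule d_le[OF w])
    moreover have "(nrm (chs_sub X u v))^2 = (chs_dist X (xs m) (xs n))^2"
      unfolding e1 dist_nrm using xs by (simp add: iso_nrm[OF A])
    moreover note parallelogram[OF u v]
    moreover have "(nrm u)^2 < d + 1 / Suc n" "(nrm v)^2 < d + 1 / Suc m"
      using xs_lt unfolding u_def v_def by auto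
    ultimately show ?thesis by linarith
  qed
  have "\<forall>e>0. \<exists>N. \<forall>m\<ge>N. \<forall>n\<ge>N. chs_dist X (xs m) (xs n) < e"
  proof (intro allI impI)
    fix e :: real assume e: "e > 0"
    obtain N :: nat where N: "4 / e^2 < N" using reals_Archimedean2 by blast
    have "\<forall>m\<ge>N. \<forall>n\<ge>N. chs_dist X (xs m) (xs n) < e"
    proof (intro allI impI)
      fix m n assume m: "m \<ge> N" and n: "n \<ge> N"
      have "0 < 4 / e^2" using e by simp
      then have Npos: "0 < real N" using N by linarith
      have "2 / Suc n \<le> 2 / N" using n Npos by (simp add: frac_le)
      moreover have "2 / Suc m \<le> 2 / N" using m Npos by (simp add: frac_le)
      moreover have "4 / N < e^2" using N e Npos by (simp add: field_simps)
      ultimately have "(chs_dist X (xs m) (xs n))^2 < e^2" using cauchy_sq[of m n] by linarith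
      then show "chs_dist X (xs m) (xs n) < e" using e xs
        by (meson dist_ge0 less_le power_less_imp_less_base)
    qed
    then show "\<exists>N. \<forall>m\<ge>N. \<forall>n\<ge>N. chs_dist X (xs m) (xs n) < e" by blast
  qed
  then obtain z where z: "z \<in> carrier X" and lim: "(\<lambda>n. chs_dist X (xs n) z) \<longlonglongrightarrow> 0"
    using complete[of xs] xs by blast
  define w where "w = chs_sub X y (A z)"
  have w: "w \<in> carrier X" using y z Ac by (simp add: w_def)
  have nw_le: "nrm w \<le> sqrt d"
  proof -
    have l1: "(\<lambda>n. 1 / real (Suc n)) \<longlonglongrightarrow> 0"
      using LIMSEQ_Suc[OF lim_inverse_n'] by simp
    have g: "(\<lambda>n. sqrt (d + 1 / Suc n) + chs_dist X (xs n) z) \<longlonglongrightarrow> sqrt (d + 0) + 0"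
      by (intro tendsto_intros lim l1)
    have "nrm w \<le> sqrt (d + 1 / Suc n) + chs_dist X (xs n) z" for n
    proof -
      have "nrm w \<le> nrm (chs_sub X y (A (xs n))) + chs_dist X w (chs_sub X y (A (xs n)))"
        using nrm_le_dist w y xs Ac by auto
      also have "chs_dist X w (chs_sub X y (A (xs n))) = chs_dist X (A (xs n)) (A z)"
      proof -
        have "chs_sub X w (chs_sub X y (A (xs n))) = chs_sub X (A (xs n)) (A z)"
          by (rule eqI_ip) (use y z xs Ac in \<open>auto simp: w_def\<close>)
        then show ?thesis by (simp add: dist_nrm)
      qed
      also have "\<dots> = chs_dist X (xs n) z" by (rule iso_dist[OF hX A xs z])
      also have "nrm (chs_sub X y (A (xs n))) \<le> sqrt (d + 1 / Suc n)"
        using xs_lt[of n] y xs Ac by (simp add: real_le_rsqrt less_imp_le)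
      finally show ?thesis by simp
    qed
    then show ?thesis using LIMSEQ_le_const[OF g, of "nrm w"] by auto
  qed
  have min: "(nrm w)^2 \<le> (nrm (chs_sub X y (A x)))^2" if x: "x \<in> carrier X" for x
  proof -
    have "(nrm w)^2 \<le> d" using nw_le w d0 by (metis nrm_ge0 power_mono real_sqrt_pow2)
    then show ?thesis using d_le[OF x] by linarith
  qed
  have orth: "inner X w (A x) = 0" if x: "x \<in> carrier X" for x
  proof (rule ccontr)
    define a where "a = inner X w (A x)"
    assume "inner X w (A x) \<noteq> 0"
    then have a0: "cmod a > 0" by (simp add: a_def)
    define s where "s = 1 / ((nrm x)^2 + 1)"
    have s: "s > 0" using x by (simp add: s_def add_nonneg_pos)
    define x' where "x' = add X z (smult X (complex_of_real s * a) x)"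
    have x': "x' \<in> carrier X" using z x by (simp add: x'_def)
    have e: "chs_sub X y (A x') = chs_sub X w (smult X (complex_of_real s * a) (A x))"
      by (rule eqI_ip) (use x z y Ac in \<open>auto simp: x'_def w_def lin_add[OF Al] lin_smult[OF Al]\<close>)
    have "(nrm (chs_sub X y (A x')))^2 = (nrm w)^2 - 2 * s * (cmod a)^2 + s^2 * (cmod a)^2 * (nrm x)^2"
    proof -
      have "inner X w (smult X (complex_of_real s * a) (A x)) = complex_of_real s * (cnj a * a)"
        using w x Ac by (simp add: a_def[symmetric])
      also have "\<dots> = complex_of_real (s * (cmod a)^2)"
        by (simp add: mult_cnj_real[of a, unfolded mult.commute[of a]])
      finally have "Re (inner X w (smult X (complex_of_real s * a) (A x))) = s * (cmod a)^2" by simp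
      moreover have "nrm (smult X (complex_of_real s * a) (A x)) = s * cmod a * nrm x"
        using x Ac s by (simp add: nrm_smult norm_mult iso_nrm[OF A])
      ultimately show ?thesis unfolding e
        using sq_dist_expand[of w "smult X (complex_of_real s * a) (A x)", unfolded dist_nrm] w x Ac
        by (simp add: power_mult_distrib)
    qed
    with min[OF x'] have "2 * s * (cmod a)^2 \<le> s^2 * (cmod a)^2 * (nrm x)^2" by linarith
    then have "2 * (cmod a)^2 \<le> s * (cmod a)^2 * (nrm x)^2" using s by (simp add: power2_eq_square)
    moreover have "s * (nrm x)^2 < 1"
    proof -
      have "s * (nrm x)^2 = (nrm x)^2 / ((nrm x)^2 + 1)" by (simp add: s_def)
      also have "\<dots> < 1" by (rule frac_lt1) simp
      finally show ?thesis .
    qed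
    moreover have "s * (cmod a)^2 * (nrm x)^2 = (s * (nrm x)^2) * (cmod a)^2" by (simp add: algebra_simps)
    moreover have "(s * (nrm x)^2) * (cmod a)^2 < 1 * (cmod a)^2"
      by (rule mult_strict_right_mono) (use a0 \<open>s * (nrm x)^2 < 1\<close> in auto)
    ultimately have "2 * (cmod a)^2 < (cmod a)^2" by linarith
    then show False using a0 by simp
  qed
  show ?thesis
  proof (intro bexI[OF _ z] ballI)
    fix x assume x: "x \<in> carrier X"
    have "y = add X (A z) w" using y z Ac by (intro eqI_ip) (auto simp: w_def)
    then have "inner X y (A x) = inner X (A z) (A x) + inner X w (A x)"
      using z x w Ac by simp
    then show "inner X z x = inner X y (A x)" using orth[OF x] iso_ip[OF A z x] by simp
  qed
qed

end


definition ph :: "real \<Rightarrow> complex" where "ph t = exp (\<i> * complex_of_real t)"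

lemma ph_add: "ph (a + b) = ph a * ph b" by (simp add: ph_def distrib_left exp_add)
lemma ph_0[simp]: "ph 0 = 1" by (simp add: ph_def)
lemma cnj_ph: "cnj (ph t) = ph (-t)" by (simp add: ph_def exp_cnj)
lemma cmod_ph[simp]: "cmod (ph t) = 1" by (simp add: ph_def)
lemma ph_neg: "ph t * ph (-t) = 1" by (simp add: ph_add[symmetric])
lemma ph_mult_cnj[simp]: "ph t * cnj (ph t) = 1" by (simp add: cnj_ph ph_neg)
lemma cnj_ph_mult[simp]: "cnj (ph t) * ph t = 1" by (simp add: cnj_ph ph_neg mult.commute)

locale dil = hilb H for H :: "'a chs" +
  fixes S T :: "real \<Rightarrow> 'a \<Rightarrow> 'a"
  assumes sS: "sc_isometry_semigroup H S" and sT: "sc_isometry_semigroup H T"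
    and weyl: "\<forall>l\<ge>0. \<forall>m\<ge>0. \<forall>x\<in>carrier H.
           S l (T m x) = smult H (exp (\<i> * complex_of_real (l * m))) (T m (S l x))"
begin

lemma S_iso: "0 \<le> t \<Longrightarrow> isometry H H (S t)" using sS by (simp add: sc_isometry_semigroup_def)
lemma T_iso: "0 \<le> t \<Longrightarrow> isometry H H (T t)" using sT by (simp add: sc_isometry_semigroup_def)
lemma S_c[simp,intro]: "0 \<le> t \<Longrightarrow> x \<in> carrier H \<Longrightarrow> S t x \<in> carrier H"
  by (rule lin_c[OF iso_lin[OF S_iso]])
lemma T_c[simp,intro]: "0 \<le> t \<Longrightarrow> x \<in> carrier H \<Longrightarrow> T t x \<in> carrier H"
  by (rule lin_c[OF iso_lin[OF T_iso]])
lemma S_add: "0 \<le> t \<Longrightarrow> x \<in> carrier H \<Longrightarrow> y \<in> carrier H \<Longrightarrow> S t (add H x y) = add H (S t x) (S t y)"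
  by (rule lin_add[OF iso_lin[OF S_iso]])
lemma T_add: "0 \<le> t \<Longrightarrow> x \<in> carrier H \<Longrightarrow> y \<in> carrier H \<Longrightarrow> T t (add H x y) = add H (T t x) (T t y)"
  by (rule lin_add[OF iso_lin[OF T_iso]])
lemma S_smult: "0 \<le> t \<Longrightarrow> x \<in> carrier H \<Longrightarrow> S t (smult H c x) = smult H c (S t x)"
  by (rule lin_smult[OF iso_lin[OF S_iso]])
lemma T_smult: "0 \<le> t \<Longrightarrow> x \<in> carrier H \<Longrightarrow> T t (smult H c x) = smult H c (T t x)"
  by (rule lin_smult[OF iso_lin[OF T_iso]])
lemma S_ip: "0 \<le> t \<Longrightarrow> x \<in> carrier H \<Longrightarrow> y \<in> carrier H \<Longrightarrow> inner H (S t x) (S t y) = inner H x y"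
  by (rule iso_ip[OF S_iso])
lemma T_ip: "0 \<le> t \<Longrightarrow> x \<in> carrier H \<Longrightarrow> y \<in> carrier H \<Longrightarrow> inner H (T t x) (T t y) = inner H x y"
  by (rule iso_ip[OF T_iso])
lemma S_0: "x \<in> carrier H \<Longrightarrow> S 0 x = x" using sS by (simp add: sc_isometry_semigroup_def)
lemma T_0: "x \<in> carrier H \<Longrightarrow> T 0 x = x" using sT by (simp add: sc_isometry_semigroup_def)
lemma S_comp: "0 \<le> s \<Longrightarrow> 0 \<le> t \<Longrightarrow> x \<in> carrier H \<Longrightarrow> S s (S t x) = S (s + t) x"
  using sS by (simp add: sc_isometry_semigroup_def)
lemma T_comp: "0 \<le> s \<Longrightarrow> 0 \<le> t \<Longrightarrow> x \<in> carrier H \<Longrightarrow> T s (T t x) = T (s + t) x"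
  using sT by (simp add: sc_isometry_semigroup_def)
lemma S_cont: "x \<in> carrier H \<Longrightarrow> 0 \<le> t \<Longrightarrow> ((\<lambda>s. chs_dist H (S s x) (S t x)) \<longlongrightarrow> 0) (at t within {0..})"
  using sS by (simp add: sc_isometry_semigroup_def)
lemma T_cont: "x \<in> carrier H \<Longrightarrow> 0 \<le> t \<Longrightarrow> ((\<lambda>s. chs_dist H (T s x) (T t x)) \<longlongrightarrow> 0) (at t within {0..})"
  using sT by (simp add: sc_isometry_semigroup_def)

lemma weyl': "0 \<le> l \<Longrightarrow> 0 \<le> m \<Longrightarrow> x \<in> carrier H \<Longrightarrow> S l (T m x) = smult H (ph (l * m)) (T m (S l x))"
  using weyl by (simp add: ph_def)

lemma TS: assumes l: "0 \<le> l" and m: "0 \<le> m" and x: "x \<in> carrier H"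
  shows "T m (S l x) = smult H (ph (-(l * m))) (S l (T m x))"
proof -
  have "smult H (ph (-(l * m))) (S l (T m x)) = smult H (ph (-(l * m)) * ph (l * m)) (T m (S l x))"
    using l m x by (simp add: weyl')
  also have "\<dots> = T m (S l x)" using l m x by (simp add: mult.commute[of "ph (- _)"] ph_neg)
  finally show ?thesis by simp
qed

definition W :: "real \<Rightarrow> real \<Rightarrow> 'a \<Rightarrow> 'a" where "W c e x = S c (T e x)"

lemma W_c[simp, intro]: "0 \<le> c \<Longrightarrow> 0 \<le> e \<Longrightarrow> x \<in> carrier H \<Longrightarrow> W c e x \<in> carrier H"
  by (simp add: W_def)
lemma W_iso: assumes c: "0 \<le> c" and e: "0 \<le> e" shows "isometry H H (W c e)"
  unfolding isometry_def lin_op_def using c e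
  by (simp add: W_def S_add T_add S_smult T_smult S_ip T_ip)
lemma W_ip: "0 \<le> c \<Longrightarrow> 0 \<le> e \<Longrightarrow> x \<in> carrier H \<Longrightarrow> y \<in> carrier H \<Longrightarrow> inner H (W c e x) (W c e y) = inner H x y"
  by (rule iso_ip[OF W_iso])
lemma W_nrm: "0 \<le> c \<Longrightarrow> 0 \<le> e \<Longrightarrow> x \<in> carrier H \<Longrightarrow> nrm (W c e x) = nrm x"
  by (rule iso_nrm[OF W_iso])
lemma W_00: "x \<in> carrier H \<Longrightarrow> W 0 0 x = x" by (simp add: W_def S_0 T_0)

lemma W_cocycle: assumes a: "0 \<le> a" and b: "0 \<le> b" and c: "0 \<le> c" and e: "0 \<le> e" and x: "x \<in> carrier H"
  shows "W a b (W c e x) = smult H (ph (-(b * c))) (W (a + c) (b + e) x)"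
proof -
  have "W a b (W c e x) = S a (T b (S c (T e x)))" by (simp add: W_def)
  also have "\<dots> = S a (smult H (ph (-(c * b))) (S c (T b (T e x))))" using a b c e x by (simp add: TS)
  also have "\<dots> = smult H (ph (-(b * c))) (S (a + c) (T (b + e) x))"
    using a b c e x by (simp add: S_smult S_comp T_comp mult.commute)
  finally show ?thesis by (simp add: W_def)
qed

definition coh :: "(real \<times> real \<Rightarrow> 'a) \<Rightarrow> bool" where
  "coh f \<longleftrightarrow> (\<forall>a b c e x. 0 \<le> c \<longrightarrow> 0 \<le> e \<longrightarrow> x \<in> carrier H \<longrightarrow>
      inner H (f (a, b)) x = ph (-(a * e)) * inner H (f (a + c, b + e)) (W c e x))"

definition Kc :: "(real \<times> real \<Rightarrow> 'a) set" where
  "Kc = {f. (\<forall>q. f q \<in> carrier H) \<and> coh f \<and> bdd_above (range (\<lambda>q. nrm (f q)))}"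

lemma Kc_iff: "f \<in> Kc \<longleftrightarrow> (\<forall>q. f q \<in> carrier H) \<and> coh f \<and> bdd_above (range (\<lambda>q. nrm (f q)))"
  by (simp only: Kc_def mem_Collect_eq)
lemma Kc_val: "f \<in> Kc \<Longrightarrow> f q \<in> carrier H" unfolding Kc_def by (cases q) auto
lemma Kc_coh: assumes f: "f \<in> Kc" and c: "0 \<le> c" and e: "0 \<le> e" and x: "x \<in> carrier H"
  shows "inner H (f (a, b)) x = ph (-(a * e)) * inner H (f (a + c, b + e)) (W c e x)"
proof -
  from f[unfolded Kc_iff] have "coh f" by (elim conjE) assumption
  then have h: "\<forall>a b c e x. 0 \<le> c \<longrightarrow> 0 \<le> e \<longrightarrow> x \<in> carrier H \<longrightarrow>
      inner H (f (a, b)) x = ph (-(a * e)) * inner H (f (a + c, b + e)) (W c e x)" unfolding coh_def .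
  show ?thesis by (rule h[rule_format, OF c e x])
qed
lemma Kc_bdd: "f \<in> Kc \<Longrightarrow> bdd_above (range (\<lambda>q. nrm (f q)))"
  unfolding Kc_iff by (elim conjE) assumption

lemma Kc_mono: assumes f: "f \<in> Kc" and c: "0 \<le> c" and e: "0 \<le> e"
  shows "nrm (f (a, b)) \<le> nrm (f (a + c, b + e))"
proof -
  note [simp] = Kc_val[OF f]
  let ?u = "f (a, b)" and ?v = "f (a + c, b + e)"
  have u: "?u \<in> carrier H" and v: "?v \<in> carrier H" using f by auto
  have "(nrm ?u)^2 = Re (inner H ?u ?u)" using u by (simp add: nrm_sq)
  also have "\<dots> = Re (ph (-(a * e)) * inner H ?v (W c e ?u))" using Kc_coh[OF f c e u] by simp
  also have "\<dots> \<le> cmod (ph (-(a * e)) * inner H ?v (W c e ?u))" by (rule complex_Re_le_cmod)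
  also have "\<dots> = cmod (inner H ?v (W c e ?u))" by (simp add: norm_mult)
  also have "\<dots> \<le> nrm ?v * nrm (W c e ?u)" using u v c e by (intro CS) auto
  also have "\<dots> = nrm ?v * nrm ?u" using u c e by (simp add: W_nrm)
  finally have *: "(nrm ?u)^2 \<le> nrm ?v * nrm ?u" .
  show ?thesis
  proof (cases "nrm ?u = 0")
    case True then show ?thesis using v by simp
  next
    case False
    then have "nrm ?u > 0" using u nrm_ge0 by (simp add: less_le)
    then show ?thesis using * by (simp add: power2_eq_square)
  qed
qed

lemma Kc_mono': "f \<in> Kc \<Longrightarrow> fst q \<le> fst q' \<Longrightarrow> snd q \<le> snd q' \<Longrightarrow> nrm (f q) \<le> nrm (f q')"
  using Kc_mono[of f "fst q' - fst q" "snd q' - snd q" "fst q" "snd q"] by simp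

definition Lsup :: "(real \<times> real \<Rightarrow> 'a) \<Rightarrow> real" where
  "Lsup f = (SUP q. (nrm (f q))^2)"

lemma Kc_bdd2: assumes f: "f \<in> Kc" shows "bdd_above (range (\<lambda>q. (nrm (f q))^2))"
proof -
  note [simp] = Kc_val[OF f]
  obtain B where B: "\<And>q. nrm (f q) \<le> B" using Kc_bdd[OF f] by (auto simp: bdd_above_def)
  have "(nrm (f q))^2 \<le> B^2" for q using B[of q] f by (intro power_mono) auto
  then show ?thesis by (intro bdd_aboveI[of _ "B^2"]) auto
qed

lemma Lsup_ge: "f \<in> Kc \<Longrightarrow> (nrm (f q))^2 \<le> Lsup f"
  unfolding Lsup_def by (rule cSUP_upper[OF _ Kc_bdd2]) auto

lemma Lsup_ge0: "f \<in> Kc \<Longrightarrow> 0 \<le> Lsup f"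
  using Lsup_ge[of f "(0,0)"] by (meson order_trans zero_le_power2)

lemma Lsup_le: "f \<in> Kc \<Longrightarrow> (\<And>q. (nrm (f q))^2 \<le> r) \<Longrightarrow> Lsup f \<le> r"
  unfolding Lsup_def by (rule cSUP_least) auto

definition cof :: "(nat \<Rightarrow> real \<times> real) \<Rightarrow> bool" where
  "cof p \<longleftrightarrow> (\<forall>A. eventually (\<lambda>n. A \<le> fst (p n) \<and> A \<le> snd (p n)) sequentially)"

lemma cof_shift: "cof (\<lambda>n. (real n + l, real n + m))"
  unfolding cof_def
proof
  fix A
  obtain N :: nat where N: "A - min l m \<le> N" using real_arch_simple by blast
  show "eventually (\<lambda>n. A \<le> fst (real n + l, real n + m) \<and> A \<le> snd (real n + l, real n + m)) sequentially"
    by (rule eventually_sequentiallyI[of N]) (use N in auto)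
qed

lemma cof_diag: "cof (\<lambda>n. (real n, real n))"
  using cof_shift[of 0 0] by simp

lemma Lsup_lim: assumes f: "f \<in> Kc" and p: "cof p"
  shows "(\<lambda>n. (nrm (f (p n)))^2) \<longlonglongrightarrow> Lsup f"
proof (rule order_tendstoI)
  note [simp] = Kc_val[OF f]
  fix y assume "y < Lsup f"
  then obtain q where q: "y < (nrm (f q))^2" unfolding Lsup_def
    using less_cSUP_iff[OF _ Kc_bdd2[OF f]] by auto
  have ev: "eventually (\<lambda>n. max (fst q) (snd q) \<le> fst (p n) \<and> max (fst q) (snd q) \<le> snd (p n)) sequentially"
    using p unfolding cof_def by blast
  show "eventually (\<lambda>n. y < (nrm (f (p n)))^2) sequentially"
  proof (rule eventually_mono[OF ev])
    fix n assume "max (fst q) (snd q) \<le> fst (p n) \<and> max (fst q) (snd q) \<le> snd (p n)"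
    then have "nrm (f q) \<le> nrm (f (p n))" using Kc_mono'[OF f, of q "p n"] by auto
    then have "(nrm (f q))^2 \<le> (nrm (f (p n)))^2" using f by (intro power_mono) auto
    then show "y < (nrm (f (p n)))^2" using q by linarith
  qed
next
  fix y assume "Lsup f < y"
  then show "eventually (\<lambda>n. (nrm (f (p n)))^2 < y) sequentially"
    using Lsup_ge[OF f] by (intro always_eventually) (meson le_less_trans)
qed

definition pl :: "(real \<times> real \<Rightarrow> 'a) \<Rightarrow> (real \<times> real \<Rightarrow> 'a) \<Rightarrow> complex \<Rightarrow> real \<times> real \<Rightarrow> 'a" where
  "pl f g c = (\<lambda>q. add H (f q) (smult H c (g q)))"

definition IP :: "(real \<times> real \<Rightarrow> 'a) \<Rightarrow> (real \<times> real \<Rightarrow> 'a) \<Rightarrow> complex" where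
  "IP f g = (complex_of_real (Lsup (pl f g 1)) - complex_of_real (Lsup (pl f g (-1)))
     + \<i> * complex_of_real (Lsup (pl f g \<i>)) - \<i> * complex_of_real (Lsup (pl f g (-\<i>)))) / 4"

lemma polar: assumes x: "x \<in> carrier H" and y: "y \<in> carrier H"
  shows "inner H x y = (complex_of_real ((nrm (add H x (smult H 1 y)))^2)
     - complex_of_real ((nrm (add H x (smult H (-1) y)))^2)
     + \<i> * complex_of_real ((nrm (add H x (smult H \<i> y)))^2)
     - \<i> * complex_of_real ((nrm (add H x (smult H (-\<i>) y)))^2)) / 4"
proof -
  have e: "complex_of_real ((nrm (add H x (smult H c y)))^2) =
     inner H x x + cnj c * inner H x y + c * inner H y x + c * cnj c * inner H y y" for c
    using x y ip_self[of "add H x (smult H c y)", symmetric] by (simp add: algebra_simps)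
  show ?thesis unfolding e by (simp add: algebra_simps)
qed

lemma Kc_add: assumes f: "f \<in> Kc" and g: "g \<in> Kc" shows "(\<lambda>q. add H (f q) (g q)) \<in> Kc"
proof -
  note [simp] = Kc_val[OF f] Kc_val[OF g]
  obtain B1 where B1: "\<And>q. nrm (f q) \<le> B1" using Kc_bdd[OF f] by (auto simp: bdd_above_def)
  obtain B2 where B2: "\<And>q. nrm (g q) \<le> B2" using Kc_bdd[OF g] by (auto simp: bdd_above_def)
  have "nrm (add H (f q) (g q)) \<le> B1 + B2" for q
    using nrm_add[of "f q" "g q"] B1[of q] B2[of q] f g by fastforce
  then have bdd: "bdd_above (range (\<lambda>q. nrm (add H (f q) (g q))))" by (intro bdd_aboveI[of _ "B1+B2"]) auto
  have "coh (\<lambda>q. add H (f q) (g q))" unfolding coh_def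
  proof (intro allI impI)
    fix a b c e x assume c: "0 \<le> (c::real)" and e: "0 \<le> (e::real)" and x: "x \<in> carrier H"
    show "inner H (add H (f (a, b)) (g (a, b))) x =
       ph (- (a * e)) * inner H (add H (f (a + c, b + e)) (g (a + c, b + e))) (W c e x)"
    proof -
      have 1: "inner H (add H (f (a, b)) (g (a, b))) x = inner H (f (a, b)) x + inner H (g (a, b)) x"
        by (rule ip_add_l) (use f g x in auto)
      have 2: "inner H (add H (f (a + c, b + e)) (g (a + c, b + e))) (W c e x) =
          inner H (f (a + c, b + e)) (W c e x) + inner H (g (a + c, b + e)) (W c e x)"
        by (rule ip_add_l) (use f g x c e in auto)
      show ?thesis by (simp only: 1 2 Kc_coh[OF f c e x, of a b] Kc_coh[OF g c e x, of a b] distrib_left)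
    qed
  qed
  then show ?thesis using f g bdd unfolding Kc_iff by (simp add: Kc_val[OF f] Kc_val[OF g])
qed

lemma Kc_smult: assumes f: "f \<in> Kc" shows "(\<lambda>q. smult H c (f q)) \<in> Kc"
proof -
  note [simp] = Kc_val[OF f]
  obtain B1 where B1: "\<And>q. nrm (f q) \<le> B1" using Kc_bdd[OF f] by (auto simp: bdd_above_def)
  have "nrm (smult H c (f q)) \<le> cmod c * B1" for q
    using B1[of q] f by (simp add: nrm_smult mult_left_mono)
  then have bdd: "bdd_above (range (\<lambda>q. nrm (smult H c (f q))))" by (intro bdd_aboveI[of _ "cmod c * B1"]) auto
  have "coh (\<lambda>q. smult H c (f q))" unfolding coh_def
  proof (intro allI impI)
    fix a b c' e x assume c: "0 \<le> (c'::real)" and e: "0 \<le> (e::real)" and x: "x \<in> carrier H"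
    show "inner H (smult H c (f (a, b))) x =
       ph (- (a * e)) * inner H (smult H c (f (a + c', b + e))) (W c' e x)"
    proof -
      have 1: "inner H (smult H c (f (a, b))) x = c * inner H (f (a, b)) x"
        by (rule ip_smult_l) (use f x in auto)
      have 2: "inner H (smult H c (f (a + c', b + e))) (W c' e x) = c * inner H (f (a + c', b + e)) (W c' e x)"
        by (rule ip_smult_l) (use f x c e in auto)
      show ?thesis by (simp only: 1 2 Kc_coh[OF f c e x, of a b] mult.left_commute)
    qed
  qed
  then show ?thesis using f bdd unfolding Kc_iff by (simp add: Kc_val[OF f])
qed

lemma Kc_pl: "f \<in> Kc \<Longrightarrow> g \<in> Kc \<Longrightarrow> pl f g c \<in> Kc"
  unfolding pl_def by (intro Kc_add Kc_smult)

lemma IP_lim: assumes f: "f \<in> Kc" and g: "g \<in> Kc" and p: "cof p"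
  shows "(\<lambda>n. inner H (f (p n)) (g (p n))) \<longlonglongrightarrow> IP f g"
proof -
  note [simp] = Kc_val[OF f] Kc_val[OF g]
  let ?R = "\<lambda>n. (complex_of_real ((nrm (pl f g 1 (p n)))^2) - complex_of_real ((nrm (pl f g (-1) (p n)))^2)
     + \<i> * complex_of_real ((nrm (pl f g \<i> (p n)))^2) - \<i> * complex_of_real ((nrm (pl f g (-\<i>) (p n)))^2)) / 4"
  have lim: "?R \<longlonglongrightarrow> IP f g"
    unfolding IP_def by (intro tendsto_intros Lsup_lim Kc_pl f g p) simp_all
  have eq: "(\<lambda>n. inner H (f (p n)) (g (p n))) = ?R"
    by (rule ext) (unfold pl_def, rule polar, auto)
  show ?thesis unfolding eq by (rule lim)
qed

lemma IP_unique: "f \<in> Kc \<Longrightarrow> g \<in> Kc \<Longrightarrow> cof p \<Longrightarrow> (\<lambda>n. inner H (f (p n)) (g (p n))) \<longlonglongrightarrow> z \<Longrightarrow> IP f g = z"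
  using IP_lim LIMSEQ_unique by metis

lemma IP_self: assumes f: "f \<in> Kc" shows "IP f f = complex_of_real (Lsup f)"
proof (rule IP_unique[OF f f cof_diag])
  note [simp] = Kc_val[OF f]
  have "(\<lambda>n. complex_of_real ((nrm (f (real n, real n)))^2)) \<longlonglongrightarrow> complex_of_real (Lsup f)"
    by (intro tendsto_of_real Lsup_lim[OF f cof_diag])
  then show "(\<lambda>n. inner H (f (real n, real n)) (f (real n, real n))) \<longlonglongrightarrow> complex_of_real (Lsup f)"
    using f by (simp add: ip_self)
qed

end

context hilb begin

lemma lim_ip: assumes u: "\<And>n. u n \<in> carrier X" and v: "v \<in> carrier X" and z: "z \<in> carrier X"
  and l: "(\<lambda>n. chs_dist X (u n) v) \<longlonglongrightarrow> 0"
  shows "(\<lambda>n. inner X (u n) z) \<longlonglongrightarrow> inner X v z"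
proof -
  have "(\<lambda>n. inner X (u n) z - inner X v z) \<longlonglongrightarrow> 0"
  proof (rule Lim_null_comparison[of _ "\<lambda>n. chs_dist X (u n) v * nrm z"])
    show "\<forall>\<^sub>F n in sequentially. norm (inner X (u n) z - inner X v z) \<le> chs_dist X (u n) v * nrm z"
      using ip_cont u v z by (intro always_eventually) auto
    show "(\<lambda>n. chs_dist X (u n) v * nrm z) \<longlonglongrightarrow> 0"
      using tendsto_mult[OF l tendsto_const[of "nrm z"]] by simp
  qed
  then show ?thesis by (rule LIM_zero_cancel)
qed

lemma lim_bound: assumes u: "\<And>n. u n \<in> carrier X" and v: "v \<in> carrier X" and w: "w \<in> carrier X"
  and l: "(\<lambda>n. chs_dist X (u n) v) \<longlonglongrightarrow> 0"
  and b: "\<And>n. n \<ge> N \<Longrightarrow> chs_dist X w (u n) \<le> r"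
  shows "chs_dist X w v \<le> r"
proof -
  have g: "(\<lambda>n. r + chs_dist X (u n) v) \<longlonglongrightarrow> r + 0" by (intro tendsto_intros l)
  have "\<exists>N. \<forall>n\<ge>N. chs_dist X w v \<le> r + chs_dist X (u n) v"
  proof (intro exI allI impI)
    fix n assume "n \<ge> N"
    then show "chs_dist X w v \<le> r + chs_dist X (u n) v"
      using dist_tri[OF w u v, of n] b[of n] by linarith
  qed
  then show ?thesis using LIMSEQ_le_const[OF g] by simp
qed

end

context dil begin

definition Kr :: "(real \<times> real \<Rightarrow> 'a) chs" where
  "Kr = \<lparr>carrier = Kc, zero = (\<lambda>q. zero H), add = (\<lambda>f g q. add H (f q) (g q)),
         smult = (\<lambda>c f q. smult H c (f q)), inner = IP\<rparr>"

lemma Kr_carrier[simp]: "carrier Kr = Kc" by (simp add: Kr_def)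
lemma Kr_zero[simp]: "zero Kr = (\<lambda>q. zero H)" by (simp add: Kr_def)
lemma Kr_add[simp]: "add Kr f g = (\<lambda>q. add H (f q) (g q))" by (simp add: Kr_def)
lemma Kr_smult[simp]: "smult Kr c f = (\<lambda>q. smult H c (f q))" by (simp add: Kr_def)
lemma Kr_inner[simp]: "inner Kr f g = IP f g" by (simp add: Kr_def)
lemma Kr_sub: "chs_sub Kr f g = (\<lambda>q. chs_sub H (f q) (g q))" by (simp add: chs_sub_def)

lemma Kc_zero: "(\<lambda>q. zero H) \<in> Kc"
proof -
  have "coh (\<lambda>q. zero H)" unfolding coh_def by simp
  moreover have "bdd_above (range (\<lambda>q::real\<times>real. nrm (zero H)))" by simp
  ultimately show ?thesis unfolding Kc_iff by simp
qed

lemma Kc_sub: "f \<in> Kc \<Longrightarrow> g \<in> Kc \<Longrightarrow> (\<lambda>q. chs_sub H (f q) (g q)) \<in> Kc"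
  unfolding chs_sub_def by (intro Kc_add Kc_smult)

lemma Kr_norm: assumes f: "f \<in> Kc" shows "chs_norm Kr f = sqrt (Lsup f)"
  by (simp add: chs_norm_def IP_self[OF f])

lemma Kr_dist: assumes f: "f \<in> Kc" and g: "g \<in> Kc"
  shows "chs_dist Kr f g = sqrt (Lsup (\<lambda>q. chs_sub H (f q) (g q)))"
  unfolding chs_dist_def Kr_sub by (rule Kr_norm[OF Kc_sub[OF f g]])

lemma dist_pt_le: assumes f: "f \<in> Kc" and g: "g \<in> Kc"
  shows "chs_dist H (f q) (g q) \<le> chs_dist Kr f g"
proof -
  have "chs_dist H (f q) (g q) = sqrt ((nrm (chs_sub H (f q) (g q)))^2)"
    using Kc_val[OF f] Kc_val[OF g] by (simp add: dist_nrm)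
  also have "\<dots> \<le> sqrt (Lsup (\<lambda>q. chs_sub H (f q) (g q)))"
    using real_sqrt_le_mono[OF Lsup_ge[OF Kc_sub[OF f g], of q]] by simp
  finally show ?thesis by (simp add: Kr_dist[OF f g])
qed

lemma dist_le_pt: assumes f: "f \<in> Kc" and g: "g \<in> Kc" and r: "0 \<le> r"
  and b: "\<And>q. chs_dist H (f q) (g q) \<le> r"
  shows "chs_dist Kr f g \<le> r"
proof -
  have "Lsup (\<lambda>q. chs_sub H (f q) (g q)) \<le> r^2"
  proof (rule Lsup_le[OF Kc_sub[OF f g]])
    fix q
    have "nrm (chs_sub H (f q) (g q)) \<le> r" using b[of q] by (simp add: dist_nrm)
    then show "(nrm (chs_sub H (f q) (g q)))^2 \<le> r^2"
      using Kc_val[OF f] Kc_val[OF g] by (intro power_mono) auto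
  qed
  then show ?thesis unfolding Kr_dist[OF f g] using r by (simp add: real_sqrt_le_iff real_le_lsqrt)
qed

lemma IP_add_l: assumes f: "f \<in> Kc" and g: "g \<in> Kc" and h: "h \<in> Kc"
  shows "IP (\<lambda>q. add H (f q) (g q)) h = IP f h + IP g h"
proof (rule IP_unique[OF Kc_add[OF f g] h cof_diag])
  have "(\<lambda>n. inner H (f (real n, real n)) (h (real n, real n)) + inner H (g (real n, real n)) (h (real n, real n)))
    \<longlonglongrightarrow> IP f h + IP g h" by (intro tendsto_add IP_lim f g h cof_diag)
  then show "(\<lambda>n. inner H (add H (f (real n, real n)) (g (real n, real n))) (h (real n, real n))) \<longlonglongrightarrow> IP f h + IP g h"
    using Kc_val[OF f] Kc_val[OF g] Kc_val[OF h] by simp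
qed

lemma IP_smult_l: assumes f: "f \<in> Kc" and g: "g \<in> Kc"
  shows "IP (\<lambda>q. smult H c (f q)) g = c * IP f g"
proof (rule IP_unique[OF Kc_smult[OF f] g cof_diag])
  have "(\<lambda>n. c * inner H (f (real n, real n)) (g (real n, real n))) \<longlonglongrightarrow> c * IP f g"
    by (intro tendsto_mult tendsto_const IP_lim f g cof_diag)
  then show "(\<lambda>n. inner H (smult H c (f (real n, real n))) (g (real n, real n))) \<longlonglongrightarrow> c * IP f g"
    using Kc_val[OF f] Kc_val[OF g] by simp
qed

lemma IP_sym: assumes f: "f \<in> Kc" and g: "g \<in> Kc"
  shows "IP f g = cnj (IP g f)"
proof (rule IP_unique[OF f g cof_diag])
  have "(\<lambda>n. cnj (inner H (g (real n, real n)) (f (real n, real n)))) \<longlonglongrightarrow> cnj (IP g f)"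
    by (intro tendsto_cnj IP_lim f g cof_diag)
  moreover have "(\<lambda>n. inner H (f (real n, real n)) (g (real n, real n))) =
      (\<lambda>n. cnj (inner H (g (real n, real n)) (f (real n, real n))))"
    by (rule ext, rule ip_sym[OF Kc_val[OF f] Kc_val[OF g]])
  ultimately show "(\<lambda>n. inner H (f (real n, real n)) (g (real n, real n))) \<longlonglongrightarrow> cnj (IP g f)"
    by simp
qed

lemma Kr_complete: assumes Y: "\<forall>n. Y n \<in> Kc"
  and C: "\<forall>e>0. \<exists>N. \<forall>m\<ge>N. \<forall>n\<ge>N. chs_dist Kr (Y m) (Y n) < e"
  shows "\<exists>L\<in>Kc. (\<lambda>n. chs_dist Kr (Y n) L) \<longlonglongrightarrow> 0"
proof -
  have Yv: "\<And>n q. Y n q \<in> carrier H" using Y Kc_val by blast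
  have ex: "\<exists>l. l \<in> carrier H \<and> (\<lambda>n. chs_dist H (Y n q) l) \<longlonglongrightarrow> 0" for q
  proof -
    have "\<forall>e>0. \<exists>N. \<forall>m\<ge>N. \<forall>n\<ge>N. chs_dist H (Y m q) (Y n q) < e"
    proof (intro allI impI)
      fix e :: real assume "e > 0"
      then obtain N where N: "\<forall>m\<ge>N. \<forall>n\<ge>N. chs_dist Kr (Y m) (Y n) < e" using C by blast
      show "\<exists>N. \<forall>m\<ge>N. \<forall>n\<ge>N. chs_dist H (Y m q) (Y n q) < e"
        using N dist_pt_le Y by (meson le_less_trans)
    qed
    then show ?thesis using complete[of "\<lambda>n. Y n q"] Yv by blast
  qed
  define L where "L q = (SOME l. l \<in> carrier H \<and> (\<lambda>n. chs_dist H (Y n q) l) \<longlonglongrightarrow> 0)" for q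
  have L: "L q \<in> carrier H" and Ll: "(\<lambda>n. chs_dist H (Y n q) (L q)) \<longlonglongrightarrow> 0" for q
    using someI_ex[OF ex[of q]] by (auto simp: L_def)
  obtain N1 where N1: "\<forall>m\<ge>N1. \<forall>n\<ge>N1. chs_dist Kr (Y m) (Y n) < 1" using C by fastforce
  have pt_bound: "chs_dist H (Y N (q)) (L q) \<le> r"
    if N: "\<forall>m\<ge>N. \<forall>n\<ge>N. chs_dist Kr (Y m) (Y n) < r" and M: "M \<ge> N" for N M r q
  proof -
    have "chs_dist H (Y N q) (L q) \<le> r"
    proof (rule lim_bound[OF Yv L Yv Ll])
      fix n assume "n \<ge> N"
      then show "chs_dist H (Y N q) (Y n q) \<le> r"
        using N dist_pt_le[of "Y N" "Y n" q] Y by fastforce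
    qed
    then show ?thesis .
  qed
  have Lcoh: "coh L" unfolding coh_def
  proof (intro allI impI)
    fix a b c e x assume c: "0 \<le> (c::real)" and e: "0 \<le> (e::real)" and x: "x \<in> carrier H"
    have l1: "(\<lambda>n. inner H (Y n (a, b)) x) \<longlonglongrightarrow> inner H (L (a, b)) x"
      by (rule lim_ip[OF Yv L x Ll])
    have l2: "(\<lambda>n. ph (-(a * e)) * inner H (Y n (a + c, b + e)) (W c e x)) \<longlonglongrightarrow>
        ph (-(a * e)) * inner H (L (a + c, b + e)) (W c e x)"
      by (intro tendsto_mult tendsto_const lim_ip[OF Yv L _ Ll]) (use c e x in simp)
    have "(\<lambda>n. inner H (Y n (a, b)) x) = (\<lambda>n. ph (-(a * e)) * inner H (Y n (a + c, b + e)) (W c e x))"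
      using Kc_coh[OF _ c e x] Y by blast
    then show "inner H (L (a, b)) x = ph (-(a * e)) * inner H (L (a + c, b + e)) (W c e x)"
      using l1 l2 LIMSEQ_unique by metis
  qed
  obtain B where B: "\<And>q. nrm (Y N1 q) \<le> B" using Kc_bdd[of "Y N1"] Y by (auto simp: bdd_above_def)
  have "nrm (L q) \<le> B + 1" for q
  proof -
    have "nrm (L q) \<le> nrm (Y N1 q) + chs_dist H (L q) (Y N1 q)" by (rule nrm_le_dist[OF L Yv])
    moreover have "chs_dist H (L q) (Y N1 q) \<le> 1"
      using pt_bound[OF N1 order_refl, of q] dist_sym[OF L Yv] by simp
    ultimately show ?thesis using B[of q] by linarith
  qed
  then have "bdd_above (range (\<lambda>q. nrm (L q)))" by (intro bdd_aboveI[of _ "B + 1"]) auto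
  then have LK: "L \<in> Kc" unfolding Kc_iff using L Lcoh by blast
  have "(\<lambda>n. chs_dist Kr (Y n) L) \<longlonglongrightarrow> 0"
  proof (rule LIMSEQ_I)
    fix r :: real assume r: "r > 0"
    then obtain N where N: "\<forall>m\<ge>N. \<forall>n\<ge>N. chs_dist Kr (Y m) (Y n) < r / 2" using C
      by (meson half_gt_zero)
    have "norm (chs_dist Kr (Y n) L - 0) < r" if n: "n \<ge> N" for n
    proof -
      have N': "\<forall>m\<ge>n. \<forall>k\<ge>n. chs_dist Kr (Y m) (Y k) < r / 2" using N n by auto
      have "chs_dist Kr (Y n) L \<le> r / 2"
        by (rule dist_le_pt) (use Y LK r pt_bound[OF N' order_refl] in auto)
      moreover have "0 \<le> chs_dist Kr (Y n) L"
        using Y LK by (simp add: Kr_dist Lsup_ge0 Kc_sub)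
      ultimately show ?thesis using r by simp
    qed
    then show "\<exists>no. \<forall>n\<ge>no. norm (chs_dist Kr (Y n) L - 0) < r" by blast
  qed
  then show ?thesis using LK by blast
qed

lemma Kr_hilbert: "complex_hilbert_space Kr"
  unfolding complex_hilbert_space_def
proof (intro conjI)
  show "zero Kr \<in> carrier Kr" by (simp add: Kc_zero)
  show "\<forall>x\<in>carrier Kr. \<forall>y\<in>carrier Kr. add Kr x y \<in> carrier Kr" by (simp add: Kc_add)
  show "\<forall>c. \<forall>x\<in>carrier Kr. smult Kr c x \<in> carrier Kr" by (simp add: Kc_smult)
  show "\<forall>x\<in>carrier Kr. \<forall>y\<in>carrier Kr. \<forall>z\<in>carrier Kr. add Kr (add Kr x y) z = add Kr x (add Kr y z)"
    by (simp add: Kc_val add_assoc)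
  show "\<forall>x\<in>carrier Kr. \<forall>y\<in>carrier Kr. add Kr x y = add Kr y x"
    using Kc_val add_comm by auto
  show "\<forall>x\<in>carrier Kr. add Kr (zero Kr) x = x" by (simp add: Kc_val)
  show "\<forall>x\<in>carrier Kr. \<exists>y\<in>carrier Kr. add Kr x y = zero Kr"
  proof
    fix f assume f: "f \<in> carrier Kr"
    have "add Kr f (\<lambda>q. smult H (-1) (f q)) = zero Kr"
      using Kc_val[of f] f by (auto simp: sub_def'[symmetric])
    then show "\<exists>y\<in>carrier Kr. add Kr f y = zero Kr" using f Kc_smult by force
  qed
  show "\<forall>c. \<forall>x\<in>carrier Kr. \<forall>y\<in>carrier Kr. smult Kr c (add Kr x y) = add Kr (smult Kr c x) (smult Kr c y)"
    by (simp add: Kc_val smult_add_r)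
  show "\<forall>a b. \<forall>x\<in>carrier Kr. smult Kr (a + b) x = add Kr (smult Kr a x) (smult Kr b x)"
    by (simp add: Kc_val smult_add_l)
  show "\<forall>a b. \<forall>x\<in>carrier Kr. smult Kr (a * b) x = smult Kr a (smult Kr b x)"
    by (simp add: Kc_val)
  show "\<forall>x\<in>carrier Kr. smult Kr 1 x = x" by (simp add: Kc_val)
  show "\<forall>x\<in>carrier Kr. \<forall>y\<in>carrier Kr. \<forall>z\<in>carrier Kr. inner Kr (add Kr x y) z = inner Kr x z + inner Kr y z"
    by (simp add: IP_add_l)
  show "\<forall>c. \<forall>x\<in>carrier Kr. \<forall>y\<in>carrier Kr. inner Kr (smult Kr c x) y = c * inner Kr x y"
    by (simp add: IP_smult_l)
  show "\<forall>x\<in>carrier Kr. \<forall>y\<in>carrier Kr. inner Kr x y = cnj (inner Kr y x)"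
  proof (intro ballI)
    fix f g assume "f \<in> carrier Kr" "g \<in> carrier Kr"
    then show "inner Kr f g = cnj (inner Kr g f)" using IP_sym[of f g] by simp
  qed
  show "\<forall>x\<in>carrier Kr. 0 \<le> Re (inner Kr x x)" by (simp add: IP_self Lsup_ge0)
  show "\<forall>x\<in>carrier Kr. inner Kr x x = 0 \<longrightarrow> x = zero Kr"
  proof (intro ballI impI)
    fix f assume f: "f \<in> carrier Kr" and "inner Kr f f = 0"
    then have L0: "Lsup f = 0" by (simp add: IP_self)
    show "f = zero Kr"
    proof
      fix q
      have "(nrm (f q))^2 \<le> 0" using Lsup_ge[of f q] f L0 by simp
      then have "nrm (f q) = 0" by simp
      then show "f q = zero Kr q" using Kc_val[of f q] f nrm_zero_iff by simp
    qed
  qed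
  show "\<forall>Y. (\<forall>n. Y n \<in> carrier Kr) \<and> (\<forall>e>0. \<exists>N. \<forall>m\<ge>N. \<forall>n\<ge>N. chs_dist Kr (Y m) (Y n) < e) \<longrightarrow>
        (\<exists>L\<in>carrier Kr. (\<lambda>n. chs_dist Kr (Y n) L) \<longlonglongrightarrow> 0)"
    using Kr_complete by simp
qed

end

context dil begin

interpretation K: hilb Kr by (unfold_locales) (rule Kr_hilbert)

lemma hilbK: "hilb Kr" by (unfold_locales) (rule Kr_hilbert)

definition Us :: "real \<Rightarrow> (real \<times> real \<Rightarrow> 'a) \<Rightarrow> (real \<times> real \<Rightarrow> 'a)" where
  "Us l f = (\<lambda>q. smult H (ph (-(l * snd q))) (f (fst q + l, snd q)))"
definition Vs :: "real \<Rightarrow> (real \<times> real \<Rightarrow> 'a) \<Rightarrow> (real \<times> real \<Rightarrow> 'a)" where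
  "Vs m f = (\<lambda>q. f (fst q, snd q + m))"

lemma Us_app: "Us l f (a, b) = smult H (ph (-(l * b))) (f (a + l, b))" by (simp add: Us_def)
lemma Vs_app: "Vs m f (a, b) = f (a, b + m)" by (simp add: Vs_def)

lemma Kc_Us: assumes f: "f \<in> Kc" shows "Us l f \<in> Kc"
proof -
  note fv = Kc_val[OF f]
  obtain B where B: "\<And>q. nrm (f q) \<le> B" using Kc_bdd[OF f] by (auto simp: bdd_above_def)
  have vals: "\<forall>q. Us l f q \<in> carrier H" by (simp add: Us_def fv)
  have "nrm (Us l f q) \<le> B" for q using B[of "(fst q + l, snd q)"] fv by (simp add: Us_def nrm_smult)
  then have bdd: "bdd_above (range (\<lambda>q. nrm (Us l f q)))" by (intro bdd_aboveI[of _ B]) auto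
  have "coh (Us l f)" unfolding coh_def
  proof (intro allI impI)
    fix a b c e x assume c: "0 \<le> (c::real)" and e: "0 \<le> (e::real)" and x: "x \<in> carrier H"
    have k: "inner H (f (a + l, b)) x = ph (-((a + l) * e)) * inner H (f (a + l + c, b + e)) (W c e x)"
      by (rule Kc_coh[OF f c e x])
    have "inner H (Us l f (a, b)) x = ph (-(l * b)) * inner H (f (a + l, b)) x"
      using fv x by (simp add: Us_app)
    also have "\<dots> = (ph (-(l * b)) * ph (-((a + l) * e))) * inner H (f (a + l + c, b + e)) (W c e x)"
      by (simp add: k)
    also have "ph (-(l * b)) * ph (-((a + l) * e)) = ph (-(a * e)) * ph (-(l * (b + e)))"
      by (simp add: ph_add[symmetric] algebra_simps)
    also have "inner H (f (a + l + c, b + e)) (W c e x) = inner H (f (a + c + l, b + e)) (W c e x)"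
      by (simp add: ac_simps)
    also have "ph (-(a * e)) * ph (-(l * (b + e))) * inner H (f (a + c + l, b + e)) (W c e x) =
        ph (-(a * e)) * inner H (Us l f (a + c, b + e)) (W c e x)"
      using fv x c e by (simp add: Us_app)
    finally show "inner H (Us l f (a, b)) x = ph (-(a * e)) * inner H (Us l f (a + c, b + e)) (W c e x)" .
  qed
  then show ?thesis unfolding Kc_iff using vals bdd by blast
qed

lemma Kc_Vs: assumes f: "f \<in> Kc" shows "Vs m f \<in> Kc"
proof -
  note fv = Kc_val[OF f]
  obtain B where B: "\<And>q. nrm (f q) \<le> B" using Kc_bdd[OF f] by (auto simp: bdd_above_def)
  have vals: "\<forall>q. Vs m f q \<in> carrier H" by (simp add: Vs_def fv)
  have "nrm (Vs m f q) \<le> B" for q using B[of "(fst q, snd q + m)"] by (simp add: Vs_def)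
  then have bdd: "bdd_above (range (\<lambda>q. nrm (Vs m f q)))" by (intro bdd_aboveI[of _ B]) auto
  have "coh (Vs m f)" unfolding coh_def
  proof (intro allI impI)
    fix a b c e x assume c: "0 \<le> (c::real)" and e: "0 \<le> (e::real)" and x: "x \<in> carrier H"
    have k: "inner H (f (a, b + m)) x = ph (-(a * e)) * inner H (f (a + c, b + m + e)) (W c e x)"
      by (rule Kc_coh[OF f c e x])
    show "inner H (Vs m f (a, b)) x = ph (-(a * e)) * inner H (Vs m f (a + c, b + e)) (W c e x)"
      unfolding Vs_app k by (simp add: ac_simps)
  qed
  then show ?thesis unfolding Kc_iff using vals bdd by blast
qed

lemma cof_shift1: "cof (\<lambda>n. (real n + l, real n))" using cof_shift[of l 0] by simp
lemma cof_shift2: "cof (\<lambda>n. (real n, real n + m))" using cof_shift[of 0 m] by simp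

lemma Us_IP: assumes f: "f \<in> Kc" and g: "g \<in> Kc" shows "IP (Us l f) (Us l g) = IP f g"
proof (rule IP_unique[OF Kc_Us[OF f] Kc_Us[OF g] cof_diag])
  have "(\<lambda>n. inner H (Us l f (real n, real n)) (Us l g (real n, real n))) =
     (\<lambda>n. inner H (f (real n + l, real n)) (g (real n + l, real n)))"
    using Kc_val[OF f] Kc_val[OF g] by (simp add: Us_app mult.assoc[symmetric])
  then show "(\<lambda>n. inner H (Us l f (real n, real n)) (Us l g (real n, real n))) \<longlonglongrightarrow> IP f g"
    using IP_lim[OF f g cof_shift1] by simp
qed

lemma Vs_IP: assumes f: "f \<in> Kc" and g: "g \<in> Kc" shows "IP (Vs m f) (Vs m g) = IP f g"
proof (rule IP_unique[OF Kc_Vs[OF f] Kc_Vs[OF g] cof_diag])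
  show "(\<lambda>n. inner H (Vs m f (real n, real n)) (Vs m g (real n, real n))) \<longlonglongrightarrow> IP f g"
    using IP_lim[OF f g cof_shift2] by (simp add: Vs_app)
qed

lemma Us_iso: "isometry Kr Kr (Us l)"
  unfolding isometry_def lin_op_def
proof (intro conjI ballI allI)
  fix f g assume f: "f \<in> carrier Kr" and g: "g \<in> carrier Kr"
  show "Us l (add Kr f g) = add Kr (Us l f) (Us l g)"
    using f g by (intro ext) (simp add: Us_def Kc_val smult_add_r)
  show "inner Kr (Us l f) (Us l g) = inner Kr f g" using f g by (simp add: Us_IP)
next
  fix c f assume f: "f \<in> carrier Kr"
  show "Us l (smult Kr c f) = smult Kr c (Us l f)"
    using f by (intro ext) (simp add: Us_def Kc_val mult.commute)
next
  fix f assume f: "f \<in> carrier Kr"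
  show "Us l f \<in> carrier Kr" using f by (simp add: Kc_Us)
qed

lemma Vs_iso: "isometry Kr Kr (Vs m)"
  unfolding isometry_def lin_op_def
proof (intro conjI ballI allI)
  fix f g assume f: "f \<in> carrier Kr" and g: "g \<in> carrier Kr"
  show "Vs m (add Kr f g) = add Kr (Vs m f) (Vs m g)"
    by (intro ext) (simp add: Vs_def)
  show "inner Kr (Vs m f) (Vs m g) = inner Kr f g" using f g by (simp add: Vs_IP)
next
  fix c f assume f: "f \<in> carrier Kr"
  show "Vs m (smult Kr c f) = smult Kr c (Vs m f)"
    by (intro ext) (simp add: Vs_def)
next
  fix f assume f: "f \<in> carrier Kr"
  show "Vs m f \<in> carrier Kr" using f by (simp add: Kc_Vs)
qed

lemma Us_comp: "f \<in> Kc \<Longrightarrow> Us s (Us t f) = Us (s + t) f"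
  by (rule ext) (auto simp: Us_def Kc_val ph_add[symmetric] algebra_simps)
lemma Vs_comp: "Vs s (Vs t f) = Vs (s + t) f"
  by (rule ext) (auto simp: Vs_def algebra_simps)
lemma Us_0: "f \<in> Kc \<Longrightarrow> Us 0 f = f"
  by (rule ext) (auto simp: Us_def Kc_val)
lemma Vs_0: "Vs 0 f = f"
  by (rule ext) (auto simp: Vs_def)

lemma Us_unitary: "unitary Kr (Us l)"
  unfolding unitary_def
proof
  show "isometry Kr Kr (Us l)" by (rule Us_iso)
  show "Us l ` carrier Kr = carrier Kr"
  proof
    show "Us l ` carrier Kr \<subseteq> carrier Kr" using Kc_Us by auto
    show "carrier Kr \<subseteq> Us l ` carrier Kr"
    proof
      fix f assume f: "f \<in> carrier Kr"
      then have "f = Us l (Us (-l) f)" by (simp add: Us_comp Us_0)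
      then show "f \<in> Us l ` carrier Kr" using f Kc_Us by auto
    qed
  qed
qed

lemma Vs_unitary: "unitary Kr (Vs m)"
  unfolding unitary_def
proof
  show "isometry Kr Kr (Vs m)" by (rule Vs_iso)
  show "Vs m ` carrier Kr = carrier Kr"
  proof
    show "Vs m ` carrier Kr \<subseteq> carrier Kr" using Kc_Vs by auto
    show "carrier Kr \<subseteq> Vs m ` carrier Kr"
    proof
      fix f assume f: "f \<in> carrier Kr"
      then have "f = Vs m (Vs (-m) f)" by (simp add: Vs_comp Vs_0)
      then show "f \<in> Vs m ` carrier Kr" using f Kc_Vs by auto
    qed
  qed
qed

lemma UV_weyl: "f \<in> Kc \<Longrightarrow> Us l (Vs m f) = smult Kr (ph (l * m)) (Vs m (Us l f))"
  by (rule ext) (auto simp: Us_def Vs_def Kc_val ph_add[symmetric] algebra_simps)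

end

context dil begin

lemma W_cocycle': assumes a: "0 \<le> a" and b: "0 \<le> b" and c: "0 \<le> c" and e: "0 \<le> e" and x: "x \<in> carrier H"
  shows "W (a + c) (b + e) x = smult H (ph (b * c)) (W a b (W c e x))"
  using a b c e x by (simp add: W_cocycle mult.assoc[symmetric] ph_add[symmetric])

definition Phi :: "'a \<Rightarrow> 'a \<Rightarrow> real \<Rightarrow> real \<Rightarrow> real \<Rightarrow> real \<Rightarrow> complex" where
  "Phi x y a b c e = ph (-(a * e)) * inner H (W (a + c) (b + e) x) (W c e y)"

lemma Phi_step: assumes x: "x \<in> carrier H" and y: "y \<in> carrier H"
  and c: "0 \<le> c" and e: "0 \<le> e" and ac: "0 \<le> a + c" and be: "0 \<le> b + e"
  and c': "0 \<le> c'" and e': "0 \<le> e'"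
  shows "Phi x y a b (c + c') (e + e') = Phi x y a b c e"
proof -
  have 1: "W (a + (c + c')) (b + (e + e')) x = smult H (ph (e' * (a + c))) (W c' e' (W (a + c) (b + e) x))"
    using W_cocycle'[OF c' e' ac be x] by (simp add: ac_simps)
  have 2: "W (c + c') (e + e') y = smult H (ph (e' * c)) (W c' e' (W c e y))"
    using W_cocycle'[OF c' e' c e y] by (simp add: ac_simps)
  have "Phi x y a b (c + c') (e + e') =
      ph (-(a * (e + e'))) * (ph (e' * (a + c)) * (cnj (ph (e' * c)) *
        inner H (W c' e' (W (a + c) (b + e) x)) (W c' e' (W c e y))))"
    unfolding Phi_def 1 2 using x y c e ac be c' e' by simp
  also have "inner H (W c' e' (W (a + c) (b + e) x)) (W c' e' (W c e y)) = inner H (W (a + c) (b + e) x) (W c e y)"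
    using x y c e ac be c' e' by (simp add: W_ip)
  also have "ph (-(a * (e + e'))) * (ph (e' * (a + c)) * (cnj (ph (e' * c)) * inner H (W (a + c) (b + e) x) (W c e y)))
      = (ph (-(a * (e + e'))) * ph (e' * (a + c)) * ph (-(e' * c))) * inner H (W (a + c) (b + e) x) (W c e y)"
    by (simp add: cnj_ph mult.assoc)
  also have "ph (-(a * (e + e'))) * ph (e' * (a + c)) * ph (-(e' * c)) = ph (-(a * e))"
    by (simp add: ph_add[symmetric] algebra_simps)
  finally show ?thesis by (simp add: Phi_def)
qed

lemma Phi_indep: assumes x: "x \<in> carrier H" and y: "y \<in> carrier H"
  and c: "0 \<le> c" and e: "0 \<le> e" and ac: "0 \<le> a + c" and be: "0 \<le> b + e"
  and c': "0 \<le> c'" and e': "0 \<le> e'" and ac': "0 \<le> a + c'" and be': "0 \<le> b + e'"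
  shows "Phi x y a b c e = Phi x y a b c' e'"
proof -
  have "Phi x y a b c e = Phi x y a b (c + (max c c' - c)) (e + (max e e' - e))"
    by (rule Phi_step[symmetric]) (use assms in auto)
  also have "\<dots> = Phi x y a b (c' + (max c c' - c')) (e' + (max e e' - e'))" by simp
  also have "\<dots> = Phi x y a b c' e'"
    by (rule Phi_step) (use assms in auto)
  finally show ?thesis .
qed

definition Adj :: "real \<Rightarrow> real \<Rightarrow> 'a \<Rightarrow> 'a" where
  "Adj c e y = (SOME z. z \<in> carrier H \<and> (\<forall>x\<in>carrier H. inner H z x = inner H y (W c e x)))"

lemma Adj: assumes c: "0 \<le> c" and e: "0 \<le> e" and y: "y \<in> carrier H"
  shows "Adj c e y \<in> carrier H" "\<And>x. x \<in> carrier H \<Longrightarrow> inner H (Adj c e y) x = inner H y (W c e x)"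
proof -
  have "\<exists>z. z \<in> carrier H \<and> (\<forall>x\<in>carrier H. inner H z x = inner H y (W c e x))"
    using adj_ex[OF W_iso[OF c e] y] by blast
  from someI_ex[OF this] show "Adj c e y \<in> carrier H" "\<And>x. x \<in> carrier H \<Longrightarrow> inner H (Adj c e y) x = inner H y (W c e x)"
    unfolding Adj_def by auto
qed

definition Jf :: "'a \<Rightarrow> real \<times> real \<Rightarrow> 'a" where
  "Jf x q = smult H (ph (-(fst q * \<bar>snd q\<bar>)))
      (Adj \<bar>fst q\<bar> \<bar>snd q\<bar> (W (fst q + \<bar>fst q\<bar>) (snd q + \<bar>snd q\<bar>) x))"

lemma Jf_c: "x \<in> carrier H \<Longrightarrow> Jf x q \<in> carrier H"
  unfolding Jf_def by (intro smult_c Adj(1) W_c) auto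

lemma Jf_ip: assumes x: "x \<in> carrier H" and y: "y \<in> carrier H"
  and c: "0 \<le> c" and e: "0 \<le> e" and ac: "0 \<le> a + c" and be: "0 \<le> b + e"
  shows "inner H (Jf x (a, b)) y = Phi x y a b c e"
proof -
  have "inner H (Jf x (a, b)) y = Phi x y a b \<bar>a\<bar> \<bar>b\<bar>"
    unfolding Jf_def Phi_def using x y by (simp add: Adj)
  also have "\<dots> = Phi x y a b c e" by (rule Phi_indep) (use assms in auto)
  finally show ?thesis .
qed

lemma Jf_quad: assumes x: "x \<in> carrier H" and a: "0 \<le> a" and b: "0 \<le> b"
  shows "Jf x (a, b) = W a b x"
proof (rule eqI_ip[OF Jf_c[OF x] W_c[OF a b x]])
  fix y assume y: "y \<in> carrier H"
  show "inner H (Jf x (a, b)) y = inner H (W a b x) y"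
    using Jf_ip[OF x y order_refl order_refl] a b x y by (simp add: Phi_def W_00)
qed

lemma Jf_coh: assumes x: "x \<in> carrier H" shows "coh (Jf x)"
  unfolding coh_def
proof (intro allI impI)
  fix a b c e y assume c: "0 \<le> (c::real)" and e: "0 \<le> (e::real)" and y: "y \<in> carrier H"
  define c1 where "c1 = \<bar>a + c\<bar>"
  define e1 where "e1 = \<bar>b + e\<bar>"
  have c1: "0 \<le> c1" and e1: "0 \<le> e1" and ac1: "0 \<le> a + c + c1" and be1: "0 \<le> b + e + e1"
    by (auto simp: c1_def e1_def)
  have r: "inner H (Jf x (a + c, b + e)) (W c e y) = Phi x (W c e y) (a + c) (b + e) c1 e1"
    by (rule Jf_ip) (use x y c e c1 e1 ac1 be1 in auto)
  have "W c1 e1 (W c e y) = smult H (ph (-(e1 * c))) (W (c1 + c) (e1 + e) y)"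
    by (rule W_cocycle) (use c e c1 e1 y in auto)
  then have "Phi x (W c e y) (a + c) (b + e) c1 e1 =
      ph (-((a + c) * e1)) * (ph (e1 * c) * inner H (W (a + (c1 + c)) (b + (e1 + e)) x) (W (c1 + c) (e1 + e) y))"
    unfolding Phi_def using x y c e c1 e1 ac1 be1 by (simp add: cnj_ph ac_simps)
  also have "ph (-(a * e)) * \<dots> = Phi x y a b (c1 + c) (e1 + e)"
  proof -
    have "ph (-(a * e)) * ph (-((a + c) * e1)) * ph (e1 * c) = ph (-(a * (e1 + e)))"
      by (simp add: ph_add[symmetric] algebra_simps)
    then show ?thesis unfolding Phi_def by (simp add: mult.assoc[symmetric])
  qed
  also have "\<dots> = inner H (Jf x (a, b)) y"
    by (rule Jf_ip[symmetric]) (use x y c e c1 e1 ac1 be1 in \<open>auto simp: ac_simps\<close>)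
  finally show "inner H (Jf x (a, b)) y = ph (-(a * e)) * inner H (Jf x (a + c, b + e)) (W c e y)"
    using r by simp
qed

lemma Jf_nrm: assumes x: "x \<in> carrier H" shows "nrm (Jf x q) \<le> nrm x"
proof -
  obtain a b where q: "q = (a, b)" by (cases q)
  let ?u = "Jf x (a, b)"
  have u: "?u \<in> carrier H" by (rule Jf_c[OF x])
  have "(nrm ?u)^2 = Re (inner H ?u ?u)" using u by (simp add: nrm_sq)
  also have "\<dots> = Re (Phi x ?u a b \<bar>a\<bar> \<bar>b\<bar>)"
  proof -
    have "inner H ?u ?u = Phi x ?u a b \<bar>a\<bar> \<bar>b\<bar>" by (rule Jf_ip[OF x u]) auto
    then show ?thesis by simp
  qed
  also have "\<dots> \<le> cmod (Phi x ?u a b \<bar>a\<bar> \<bar>b\<bar>)" by (rule complex_Re_le_cmod)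
  also have "\<dots> = cmod (inner H (W (a + \<bar>a\<bar>) (b + \<bar>b\<bar>) x) (W \<bar>a\<bar> \<bar>b\<bar> ?u))"
    by (simp add: Phi_def norm_mult)
  also have "\<dots> \<le> nrm (W (a + \<bar>a\<bar>) (b + \<bar>b\<bar>) x) * nrm (W \<bar>a\<bar> \<bar>b\<bar> ?u)"
    by (rule CS) (use x u in auto)
  also have "\<dots> = nrm x * nrm ?u" using x u by (simp add: W_nrm)
  finally have *: "(nrm ?u)^2 \<le> nrm x * nrm ?u" .
  show ?thesis
  proof (cases "nrm ?u = 0")
    case True then show ?thesis using x q by simp
  next
    case False
    then have "nrm ?u > 0" using u nrm_ge0 by (simp add: less_le)
    then show ?thesis using * q by (simp add: power2_eq_square)
  qed
qed

lemma Kc_Jf: assumes x: "x \<in> carrier H" shows "Jf x \<in> Kc"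
  unfolding Kc_iff using Jf_c[OF x] Jf_coh[OF x] Jf_nrm[OF x]
  by (auto intro: bdd_aboveI[of _ "nrm x"])

lemma Kc_agree: assumes f: "f \<in> Kc" and g: "g \<in> Kc"
  and h: "\<And>a b. 0 \<le> a \<Longrightarrow> 0 \<le> b \<Longrightarrow> f (a, b) = g (a, b)"
  shows "f = g"
proof
  fix q
  obtain a b :: real where q: "q = (a, b)" by (cases q)
  have "f (a, b) = g (a, b)"
  proof (rule eqI_ip[OF Kc_val[OF f] Kc_val[OF g]])
    fix y assume y: "y \<in> carrier H"
    have "inner H (f (a, b)) y = ph (-(a * \<bar>b\<bar>)) * inner H (f (a + \<bar>a\<bar>, b + \<bar>b\<bar>)) (W \<bar>a\<bar> \<bar>b\<bar> y)"
      by (rule Kc_coh[OF f _ _ y]) auto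
    also have "f (a + \<bar>a\<bar>, b + \<bar>b\<bar>) = g (a + \<bar>a\<bar>, b + \<bar>b\<bar>)" by (rule h) auto
    also have "ph (-(a * \<bar>b\<bar>)) * inner H (g (a + \<bar>a\<bar>, b + \<bar>b\<bar>)) (W \<bar>a\<bar> \<bar>b\<bar> y) = inner H (g (a, b)) y"
      by (rule Kc_coh[OF g _ _ y, symmetric]) auto
    finally show "inner H (f (a, b)) y = inner H (g (a, b)) y" .
  qed
  then show "f q = g q" using q by simp
qed

lemma Jf_iso: "isometry H Kr Jf"
  unfolding isometry_def lin_op_def
proof (intro conjI ballI allI)
  fix x y assume x: "x \<in> carrier H" and y: "y \<in> carrier H"
  show "Jf (add H x y) = add Kr (Jf x) (Jf y)"
    by (rule Kc_agree) (use x y in \<open>auto simp: Kc_Jf Kc_add Jf_quad W_def S_add T_add\<close>)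
  show "inner Kr (Jf x) (Jf y) = inner H x y"
  proof -
    have "IP (Jf x) (Jf y) = inner H x y"
    proof (rule IP_unique[OF Kc_Jf[OF x] Kc_Jf[OF y] cof_diag])
      show "(\<lambda>n. inner H (Jf x (real n, real n)) (Jf y (real n, real n))) \<longlonglongrightarrow> inner H x y"
        using x y by (simp add: Jf_quad W_ip)
    qed
    then show ?thesis by simp
  qed
next
  fix c x assume x: "x \<in> carrier H"
  show "Jf (smult H c x) = smult Kr c (Jf x)"
    by (rule Kc_agree) (use x in \<open>auto simp: Kc_Jf Kc_smult Jf_quad W_def S_smult T_smult\<close>)
next
  fix x assume x: "x \<in> carrier H"
  show "Jf x \<in> carrier Kr" using x by (simp add: Kc_Jf)
qed

lemma IP_Jf: assumes h: "h \<in> Kc" and y: "y \<in> carrier H" shows "IP h (Jf y) = inner H (h (0, 0)) y"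
proof (rule IP_unique[OF h Kc_Jf[OF y] cof_diag])
  have "inner H (h (real n, real n)) (Jf y (real n, real n)) = inner H (h (0, 0)) y" for n
    using Kc_coh[OF h _ _ y, of "real n" "real n" 0 0] y by (simp add: Jf_quad)
  then show "(\<lambda>n. inner H (h (real n, real n)) (Jf y (real n, real n))) \<longlonglongrightarrow> inner H (h (0, 0)) y"
    by simp
qed

lemma UJ: assumes l: "0 \<le> l" and x: "x \<in> carrier H" shows "Us l (Jf x) = Jf (S l x)"
proof (rule Kc_agree[OF Kc_Us[OF Kc_Jf[OF x]] Kc_Jf])
  show "S l x \<in> carrier H" using l x by simp
  fix a b :: real assume a: "0 \<le> a" and b: "0 \<le> b"
  have "W a b (W l 0 x) = smult H (ph (-(b * l))) (W (a + l) (b + 0) x)"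
    by (rule W_cocycle) (use a b l x in auto)
  moreover have "W l 0 x = S l x" using x by (simp add: W_def T_0)
  ultimately show "Us l (Jf x) (a, b) = Jf (S l x) (a, b)"
    using a b l x by (simp add: Us_app Jf_quad mult.commute)
qed

lemma VJ: assumes m: "0 \<le> m" and x: "x \<in> carrier H" shows "Vs m (Jf x) = Jf (T m x)"
proof (rule Kc_agree[OF Kc_Vs[OF Kc_Jf[OF x]] Kc_Jf])
  show "T m x \<in> carrier H" using m x by simp
  fix a b :: real assume a: "0 \<le> a" and b: "0 \<le> b"
  have "W a b (W 0 m x) = smult H (ph (-(b * 0))) (W (a + 0) (b + m) x)"
    by (rule W_cocycle) (use a b m x in auto)
  moreover have "W 0 m x = T m x" using m x by (simp add: W_def S_0)
  ultimately show "Vs m (Jf x) (a, b) = Jf (T m x) (a, b)"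
    using a b m x by (simp add: Vs_app Jf_quad)
qed

lemma orth_proj_self: assumes x: "x \<in> carrier H"
  shows "orth_proj Kr (Jf ` carrier H) (Jf x) = Jf x"
  unfolding orth_proj_def
proof (rule the_equality)
  show "Jf x \<in> Jf ` carrier H \<and> (\<forall>m\<in>Jf ` carrier H. inner Kr (chs_sub Kr (Jf x) (Jf x)) m = 0)"
    using x Kc_Jf by (auto simp: hilb.sub_self[OF hilbK] IP_Jf[OF Kc_zero])
next
  fix w assume w: "w \<in> Jf ` carrier H \<and> (\<forall>m\<in>Jf ` carrier H. inner Kr (chs_sub Kr (Jf x) w) m = 0)"
  then obtain z where z: "z \<in> carrier H" and wz: "w = Jf z" by blast
  have "chs_sub Kr (Jf x) (Jf z) = Jf (chs_sub H x z)"
    by (rule lin_sub[OF hilb_axioms iso_lin[OF Jf_iso] x z, symmetric])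
  moreover have "Jf (chs_sub H x z) \<in> Jf ` carrier H" using x z by simp
  ultimately have "inner Kr (chs_sub Kr (Jf x) w) (chs_sub Kr (Jf x) w) = 0" using w wz by metis
  then have "chs_sub Kr (Jf x) w = zero Kr"
    by (intro hilb.ip_zero_imp[OF hilbK]) (use x z wz Kc_Jf Kc_sub in \<open>auto simp: Kr_sub\<close>)
  then show "w = Jf x"
    using hilb.sub_zero_eq[OF hilbK, of "Jf x" w] x z wz Kc_Jf by auto
qed

end

context hilb begin

lemma dist_smult_both: assumes u: "u \<in> carrier X" and v: "v \<in> carrier X"
  shows "chs_dist X (smult X c u) (smult X c v) = cmod c * chs_dist X u v"
proof -
  have "chs_sub X (smult X c u) (smult X c v) = smult X c (chs_sub X u v)"
    by (rule eqI_ip) (use u v in \<open>auto simp: algebra_simps\<close>)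
  then show ?thesis using u v by (simp add: dist_nrm nrm_smult)
qed

lemma dist_smult_self: assumes v: "v \<in> carrier X"
  shows "chs_dist X (smult X c v) v = cmod (c - 1) * nrm v"
proof -
  have "chs_sub X (smult X c v) v = smult X (c - 1) v"
    by (rule eqI_ip) (use v in \<open>auto simp: algebra_simps\<close>)
  then show ?thesis using v by (simp add: dist_nrm nrm_smult)
qed

lemma dist_phase: assumes A: "isometry X X A" and u: "u \<in> carrier X" and v: "v \<in> carrier X"
  and c: "cmod c = 1"
  shows "chs_dist X (smult X c (A u)) (A v) \<le> chs_dist X u v + cmod (c - 1) * nrm v"
proof -
  have hX: "hilb X" by (rule hilb_axioms)
  have Al: "lin_op X X A" using A by (rule iso_lin)
  have "smult X c (A u) = A (smult X c u)" using Al u by (simp add: lin_smult)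
  then have "chs_dist X (smult X c (A u)) (A v) = chs_dist X (smult X c u) v"
    using iso_dist[OF hX A] u v by simp
  also have "\<dots> \<le> chs_dist X (smult X c u) (smult X c v) + chs_dist X (smult X c v) v"
    by (rule dist_tri) (use u v in auto)
  also have "\<dots> = chs_dist X u v + cmod (c - 1) * nrm v"
    using u v c by (simp add: dist_smult_both dist_smult_self)
  finally show ?thesis .
qed

lemma sc_from: fixes G :: "real \<Rightarrow> 'v \<Rightarrow> 'v" assumes G: "\<And>t. isometry X X (G t)"
  and grp: "\<And>s t x. x \<in> carrier X \<Longrightarrow> G (s + t) x = G s (G t x)"
  and dense: "\<And>f e. f \<in> carrier X \<Longrightarrow> e > 0 \<Longrightarrow>
      \<exists>\<xi>\<in>carrier X. chs_dist X f \<xi> < e \<and> ((\<lambda>h. chs_dist X (G h \<xi>) \<xi>) \<longlongrightarrow> 0) (at 0)"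
  and f: "f \<in> carrier X"
  shows "((\<lambda>s. chs_dist X (G s f) (G t f)) \<longlongrightarrow> 0) (at t)"
proof -
  have hX: "hilb X" by (rule hilb_axioms)
  have Gc: "\<And>t x. x \<in> carrier X \<Longrightarrow> G t x \<in> carrier X" using G iso_lin lin_c by metis
  have at0: "((\<lambda>h. chs_dist X (G h f) f) \<longlongrightarrow> 0) (at 0)"
    unfolding tendsto_iff
  proof (intro allI impI)
    fix e :: real assume e: "e > 0"
    then obtain \<xi> where \<xi>: "\<xi> \<in> carrier X" and d: "chs_dist X f \<xi> < e / 3"
      and l: "((\<lambda>h. chs_dist X (G h \<xi>) \<xi>) \<longlongrightarrow> 0) (at 0)" using dense[OF f, of "e/3"] by auto
    have ev: "eventually (\<lambda>h. dist (chs_dist X (G h \<xi>) \<xi>) 0 < e / 3) (at 0)"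
      using e by (intro l[unfolded tendsto_iff, rule_format]) simp
    show "eventually (\<lambda>h. dist (chs_dist X (G h f) f) 0 < e) (at (0::real))"
    proof (rule eventually_mono[OF ev])
      fix h :: real assume h: "dist (chs_dist X (G h \<xi>) \<xi>) 0 < e / 3"
      have "chs_dist X (G h f) f \<le> chs_dist X (G h f) (G h \<xi>) + chs_dist X (G h \<xi>) f"
        by (rule dist_tri) (use f \<xi> Gc in auto)
      also have "chs_dist X (G h \<xi>) f \<le> chs_dist X (G h \<xi>) \<xi> + chs_dist X \<xi> f"
        by (rule dist_tri) (use f \<xi> Gc in auto)
      also have "chs_dist X (G h f) (G h \<xi>) = chs_dist X f \<xi>" by (rule iso_dist[OF hX G f \<xi>])
      also have "chs_dist X \<xi> f = chs_dist X f \<xi>" by (rule dist_sym[OF \<xi> f])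
      finally have "chs_dist X (G h f) f < e" using h d by (simp add: dist_real_def)
      moreover have "0 \<le> chs_dist X (G h f) f" using f Gc by simp
      ultimately show "dist (chs_dist X (G h f) f) 0 < e" by (simp add: dist_real_def)
    qed
  qed
  have "(\<lambda>h. chs_dist X (G (t + h) f) (G t f)) = (\<lambda>h. chs_dist X (G h f) f)"
  proof
    fix h
    have "G (t + h) f = G t (G h f)" using grp f by simp
    then show "chs_dist X (G (t + h) f) (G t f) = chs_dist X (G h f) f"
      using iso_dist[OF hX G Gc[OF f] f] by simp
  qed
  with at0 have "((\<lambda>h. chs_dist X (G (t + h) f) (G t f)) \<longlongrightarrow> 0) (at 0)" by simp
  then show ?thesis by (rule LIM_offset_zero_cancel)
qed

end

lemma iso_comp: "isometry X Y A \<Longrightarrow> isometry Y Z B \<Longrightarrow> isometry X Z (\<lambda>x. B (A x))"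
  by (simp add: isometry_def lin_op_def)

context dil begin

lemma Kr_sq_norm: "f \<in> Kc \<Longrightarrow> (chs_norm Kr f)^2 = Lsup f"
  by (simp add: Kr_norm Lsup_ge0)

definition xi :: "real \<Rightarrow> 'a \<Rightarrow> real \<times> real \<Rightarrow> 'a" where
  "xi c y = Vs (-c) (Us (-c) (Jf y))"

lemma xi_K: "y \<in> carrier H \<Longrightarrow> xi c y \<in> Kc"
  by (simp add: xi_def Kc_Vs Kc_Us Kc_Jf)

lemma dense_K: assumes f: "f \<in> Kc" and e: "e > 0"
  shows "\<exists>n. chs_dist Kr f (xi (real n) (f (real n, real n))) < e"
proof -
  have hK: "hilb Kr" by (rule hilbK)
  have dist_sq: "(chs_dist Kr f (xi c (f (c, c))))^2 = Lsup f - (nrm (f (c, c)))^2" for c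
  proof -
    define y where "y = f (c, c)"
    have y: "y \<in> carrier H" using Kc_val[OF f] by (simp add: y_def)
    have xiK: "xi c y \<in> Kc" by (rule xi_K[OF y])
    have n1: "chs_norm Kr (xi c y) = nrm y"
    proof -
      have "chs_norm Kr (xi c y) = chs_norm Kr (Us (-c) (Jf y))"
        unfolding xi_def by (rule iso_nrm[OF Vs_iso]) (simp add: Kc_Us Kc_Jf y)
      also have "\<dots> = chs_norm Kr (Jf y)" by (rule iso_nrm[OF Us_iso]) (simp add: Kc_Jf y)
      also have "\<dots> = nrm y" by (rule iso_nrm[OF Jf_iso y])
      finally show ?thesis .
    qed
    have bk: "Us c (Vs c (xi c y)) = Jf y"
      unfolding xi_def by (simp add: Vs_comp Vs_0 Us_comp Us_0 Kc_Us Kc_Jf y)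
    have "IP f (xi c y) = IP (Us c (Vs c f)) (Us c (Vs c (xi c y)))"
      by (simp add: Us_IP Vs_IP Kc_Vs f xiK)
    also have "\<dots> = IP (Us c (Vs c f)) (Jf y)" by (simp add: bk)
    also have "\<dots> = inner H (Us c (Vs c f) (0, 0)) y" by (rule IP_Jf[OF Kc_Us[OF Kc_Vs[OF f]] y])
    also have "Us c (Vs c f) (0, 0) = y" using Kc_val[OF f] by (simp add: Us_app Vs_app y_def)
    finally have "IP f (xi c y) = inner H y y" .
    then have ip: "Re (inner Kr f (xi c y)) = (nrm y)^2" using y by (simp add: nrm_sq)
    show ?thesis
      using hilb.sq_dist_expand[OF hK, of f "xi c y"] f xiK ip n1 Kr_sq_norm[OF f]
      by (simp add: y_def)
  qed
  have "(\<lambda>n. (nrm (f (real n, real n)))^2) \<longlonglongrightarrow> Lsup f" by (rule Lsup_lim[OF f cof_diag])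
  moreover have "Lsup f - e^2 < Lsup f" using e by simp
  ultimately have "eventually (\<lambda>n. Lsup f - e^2 < (nrm (f (real n, real n)))^2) sequentially"
    by (rule order_tendstoD(1))
  then obtain N where N: "\<forall>n\<ge>N. Lsup f - e^2 < (nrm (f (real n, real n)))^2"
    unfolding eventually_sequentially by blast
  define n where "n = N"
  have n: "Lsup f - e^2 < (nrm (f (real n, real n)))^2" using N by (simp add: n_def)
  have "(chs_dist Kr f (xi (real n) (f (real n, real n))))^2 < e^2" using dist_sq n by simp
  then have "chs_dist Kr f (xi (real n) (f (real n, real n))) < e"
    by (rule power_less_imp_less_base) (use e in simp)
  then show ?thesis by blast
qed

lemma Us_lim_J: assumes y: "y \<in> carrier H"
  shows "((\<lambda>h. chs_dist Kr (Us h (Jf y)) (Jf y)) \<longlongrightarrow> 0) (at 0)"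
proof -
  have hK: "hilb Kr" by (rule hilbK)
  have eq: "chs_dist Kr (Us h (Jf y)) (Jf y) = chs_dist H (S \<bar>h\<bar> y) (S 0 y)" for h
  proof (cases "0 \<le> h")
    case True
    then show ?thesis using iso_dist[OF hilb_axioms Jf_iso, of "S h y" y] y
      by (simp add: UJ S_0)
  next
    case False
    have "chs_dist Kr (Us h (Jf y)) (Jf y) = chs_dist Kr (Us (-h) (Us h (Jf y))) (Us (-h) (Jf y))"
      by (rule iso_dist[OF hK Us_iso, symmetric]) (simp_all add: Kc_Us Kc_Jf y)
    also have "\<dots> = chs_dist Kr (Jf y) (Jf (S (-h) y))"
      using False y by (simp add: Us_comp Us_0 Kc_Jf UJ S_0)
    also have "\<dots> = chs_dist H y (S (-h) y)" using False y by (intro iso_dist[OF hilb_axioms Jf_iso]) auto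
    also have "\<dots> = chs_dist H (S \<bar>h\<bar> y) (S 0 y)" using False y by (simp add: dist_sym S_0)
    finally show ?thesis .
  qed
  have "filterlim abs (at 0 within {0..}) (at (0::real))"
    unfolding filterlim_at
    by (auto intro!: tendsto_rabs_zero tendsto_ident_at simp: eventually_at_filter)
  from filterlim_compose[OF S_cont[OF y order_refl] this]
  show ?thesis unfolding eq by simp
qed

lemma Vs_lim_J: assumes y: "y \<in> carrier H"
  shows "((\<lambda>h. chs_dist Kr (Vs h (Jf y)) (Jf y)) \<longlongrightarrow> 0) (at 0)"
proof -
  have hK: "hilb Kr" by (rule hilbK)
  have eq: "chs_dist Kr (Vs h (Jf y)) (Jf y) = chs_dist H (T \<bar>h\<bar> y) (T 0 y)" for h
  proof (cases "0 \<le> h")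
    case True
    then show ?thesis using iso_dist[OF hilb_axioms Jf_iso, of "T h y" y] y
      by (simp add: VJ T_0)
  next
    case False
    have "chs_dist Kr (Vs h (Jf y)) (Jf y) = chs_dist Kr (Vs (-h) (Vs h (Jf y))) (Vs (-h) (Jf y))"
      by (rule iso_dist[OF hK Vs_iso, symmetric]) (simp_all add: Kc_Vs Kc_Jf y)
    also have "\<dots> = chs_dist Kr (Jf y) (Jf (T (-h) y))"
      using False y by (simp add: Vs_comp Vs_0 Kc_Jf VJ T_0)
    also have "\<dots> = chs_dist H y (T (-h) y)" using False y by (intro iso_dist[OF hilb_axioms Jf_iso]) auto
    also have "\<dots> = chs_dist H (T \<bar>h\<bar> y) (T 0 y)" using False y by (simp add: dist_sym T_0)
    finally show ?thesis .
  qed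
  have "filterlim abs (at 0 within {0..}) (at (0::real))"
    unfolding filterlim_at
    by (auto intro!: tendsto_rabs_zero tendsto_ident_at simp: eventually_at_filter)
  from filterlim_compose[OF T_cont[OF y order_refl] this]
  show ?thesis unfolding eq by simp
qed

lemma ph_lim: "((\<lambda>h. cmod (ph (h * k) - 1) * r) \<longlongrightarrow> 0) (at 0)"
proof -
  have "((\<lambda>h. cmod (ph (h * k) - 1) * r) \<longlongrightarrow> cmod (ph (0 * k) - 1) * r) (at 0)"
    unfolding ph_def by (intro tendsto_intros)
  then show ?thesis by simp
qed

lemma A_iso: "isometry Kr Kr (\<lambda>g. Vs (-c) (Us (-c) g))"
  by (rule iso_comp[OF Us_iso Vs_iso])

lemma Us_xi: assumes y: "y \<in> carrier H"
  shows "Us h (xi c y) = smult Kr (ph (h * (-c))) (Vs (-c) (Us (-c) (Us h (Jf y))))"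
proof -
  have "Us h (xi c y) = smult Kr (ph (h * (-c))) (Vs (-c) (Us h (Us (-c) (Jf y))))"
    unfolding xi_def by (rule UV_weyl) (simp add: Kc_Us Kc_Jf y)
  also have "Us h (Us (-c) (Jf y)) = Us (-c) (Us h (Jf y))"
    by (simp add: Us_comp Kc_Jf y add.commute)
  finally show ?thesis .
qed

lemma Vs_xi: assumes y: "y \<in> carrier H"
  shows "Vs h (xi c y) = smult Kr (ph (c * h)) (Vs (-c) (Us (-c) (Vs h (Jf y))))"
proof -
  have g: "Us (-c) (Jf y) \<in> Kc" by (simp add: Kc_Us Kc_Jf y)
  have w: "Us (-c) (Vs h (Jf y)) = smult Kr (ph (-c * h)) (Vs h (Us (-c) (Jf y)))"
    by (rule UV_weyl) (simp add: Kc_Jf y)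
  have hv: "Vs h (Us (-c) (Jf y)) = smult Kr (ph (c * h)) (Us (-c) (Vs h (Jf y)))"
  proof -
    have "smult Kr (ph (c * h)) (Us (-c) (Vs h (Jf y))) = smult Kr (ph (c * h) * ph (-c * h)) (Vs h (Us (-c) (Jf y)))"
      unfolding w using Kc_val[OF Kc_Vs[OF g]] by simp
    also have "ph (c * h) * ph (-c * h) = 1" using ph_neg[of "c * h"] by simp
    finally show ?thesis using Kc_val[OF Kc_Vs[OF g]] by simp
  qed
  have vv: "Vs h (xi c y) = Vs (-c) (Vs h (Us (-c) (Jf y)))"
    unfolding xi_def by (simp add: Vs_comp add.commute)
  then have "Vs h (xi c y) = Vs (-c) (smult Kr (ph (c * h)) (Us (-c) (Vs h (Jf y))))"
    by (simp only: hv)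
  also have "\<dots> = smult Kr (ph (c * h)) (Vs (-c) (Us (-c) (Vs h (Jf y))))"
    by (rule lin_smult[OF iso_lin[OF Vs_iso]]) (simp add: Kc_Us Kc_Vs Kc_Jf y)
  finally show ?thesis .
qed

lemma Us_lim_xi: assumes y: "y \<in> carrier H"
  shows "((\<lambda>h. chs_dist Kr (Us h (xi c y)) (xi c y)) \<longlongrightarrow> 0) (at 0)"
proof (rule Lim_null_comparison)
  have hK: "hilb Kr" by (rule hilbK)
  show "\<forall>\<^sub>F h in at 0. norm (chs_dist Kr (Us h (xi c y)) (xi c y)) \<le>
      chs_dist Kr (Us h (Jf y)) (Jf y) + cmod (ph (h * (-c)) - 1) * chs_norm Kr (Jf y)"
  proof (intro always_eventually allI)
    fix h
    have "chs_dist Kr (Us h (xi c y)) (xi c y) \<le> chs_dist Kr (Us h (Jf y)) (Jf y) + cmod (ph (h * (-c)) - 1) * chs_norm Kr (Jf y)"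
      unfolding Us_xi[OF y] unfolding xi_def
      by (rule hilb.dist_phase[OF hK A_iso]) (simp_all add: Kc_Us Kc_Jf y)
    moreover have "0 \<le> chs_dist Kr (Us h (xi c y)) (xi c y)"
      using hilb.dist_ge0[OF hK] xi_K[OF y] Kc_Us[OF xi_K[OF y]] by simp
    ultimately show "norm (chs_dist Kr (Us h (xi c y)) (xi c y)) \<le>
      chs_dist Kr (Us h (Jf y)) (Jf y) + cmod (ph (h * (-c)) - 1) * chs_norm Kr (Jf y)" by simp
  qed
  show "((\<lambda>h. chs_dist Kr (Us h (Jf y)) (Jf y) + cmod (ph (h * (-c)) - 1) * chs_norm Kr (Jf y)) \<longlongrightarrow> 0) (at 0)"
    using tendsto_add[OF Us_lim_J[OF y] ph_lim[of "-c" "chs_norm Kr (Jf y)"]] by simp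
qed

lemma Vs_lim_xi: assumes y: "y \<in> carrier H"
  shows "((\<lambda>h. chs_dist Kr (Vs h (xi c y)) (xi c y)) \<longlongrightarrow> 0) (at 0)"
proof (rule Lim_null_comparison)
  have hK: "hilb Kr" by (rule hilbK)
  show "\<forall>\<^sub>F h in at 0. norm (chs_dist Kr (Vs h (xi c y)) (xi c y)) \<le>
      chs_dist Kr (Vs h (Jf y)) (Jf y) + cmod (ph (h * c) - 1) * chs_norm Kr (Jf y)"
  proof (intro always_eventually allI)
    fix h
    have "chs_dist Kr (Vs h (xi c y)) (xi c y) \<le> chs_dist Kr (Vs h (Jf y)) (Jf y) + cmod (ph (c * h) - 1) * chs_norm Kr (Jf y)"
      unfolding Vs_xi[OF y] unfolding xi_def
      by (rule hilb.dist_phase[OF hK A_iso]) (simp_all add: Kc_Vs Kc_Jf y)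
    moreover have "0 \<le> chs_dist Kr (Vs h (xi c y)) (xi c y)"
      using hilb.dist_ge0[OF hK] xi_K[OF y] Kc_Vs[OF xi_K[OF y]] by simp
    ultimately show "norm (chs_dist Kr (Vs h (xi c y)) (xi c y)) \<le>
      chs_dist Kr (Vs h (Jf y)) (Jf y) + cmod (ph (h * c) - 1) * chs_norm Kr (Jf y)" by (simp add: mult.commute)
  qed
  show "((\<lambda>h. chs_dist Kr (Vs h (Jf y)) (Jf y) + cmod (ph (h * c) - 1) * chs_norm Kr (Jf y)) \<longlongrightarrow> 0) (at 0)"
    using tendsto_add[OF Vs_lim_J[OF y] ph_lim[of c "chs_norm Kr (Jf y)"]] by simp
qed

lemma Us_group: "sc_unitary_group Kr Us"
  unfolding sc_unitary_group_def
proof (intro conjI allI ballI)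
  fix t show "unitary Kr (Us t)" by (rule Us_unitary)
next
  fix x assume "x \<in> carrier Kr" then show "Us 0 x = x" by (simp add: Us_0)
next
  fix s t x assume "x \<in> carrier Kr" then show "Us (s + t) x = Us s (Us t x)" by (simp add: Us_comp)
next
  fix f t assume f: "f \<in> carrier Kr"
  show "((\<lambda>s. chs_dist Kr (Us s f) (Us t f)) \<longlongrightarrow> 0) (at t)"
  proof (rule hilb.sc_from[OF hilbK])
    show "isometry Kr Kr (Us t)" for t by (rule Us_iso)
    show "Us (s + t) x = Us s (Us t x)" if "x \<in> carrier Kr" for s t x using that by (simp add: Us_comp)
    show "f \<in> carrier Kr" by (rule f)
    fix g e assume g: "g \<in> carrier Kr" and e: "(e::real) > 0"
    obtain n where n: "chs_dist Kr g (xi (real n) (g (real n, real n))) < e"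
      using dense_K[of g e] g e by auto
    have y: "g (real n, real n) \<in> carrier H" using g Kc_val by simp
    show "\<exists>\<xi>\<in>carrier Kr. chs_dist Kr g \<xi> < e \<and> ((\<lambda>h. chs_dist Kr (Us h \<xi>) \<xi>) \<longlongrightarrow> 0) (at 0)"
      using n xi_K[OF y] Us_lim_xi[OF y] by auto
  qed
qed

lemma Vs_group: "sc_unitary_group Kr Vs"
  unfolding sc_unitary_group_def
proof (intro conjI allI ballI)
  fix t show "unitary Kr (Vs t)" by (rule Vs_unitary)
next
  fix x assume "x \<in> carrier Kr" then show "Vs 0 x = x" by (simp add: Vs_0)
next
  fix s t x assume "x \<in> carrier Kr" then show "Vs (s + t) x = Vs s (Vs t x)" by (simp add: Vs_comp)
next
  fix f t assume f: "f \<in> carrier Kr"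
  show "((\<lambda>s. chs_dist Kr (Vs s f) (Vs t f)) \<longlongrightarrow> 0) (at t)"
  proof (rule hilb.sc_from[OF hilbK])
    show "isometry Kr Kr (Vs t)" for t by (rule Vs_iso)
    show "Vs (s + t) x = Vs s (Vs t x)" if "x \<in> carrier Kr" for s t x by (simp add: Vs_comp)
    show "f \<in> carrier Kr" by (rule f)
    fix g e assume g: "g \<in> carrier Kr" and e: "(e::real) > 0"
    obtain n where n: "chs_dist Kr g (xi (real n) (g (real n, real n))) < e"
      using dense_K[of g e] g e by auto
    have y: "g (real n, real n) \<in> carrier H" using g Kc_val by simp
    show "\<exists>\<xi>\<in>carrier Kr. chs_dist Kr g \<xi> < e \<and> ((\<lambda>h. chs_dist Kr (Vs h \<xi>) \<xi>) \<longlongrightarrow> 0) (at 0)"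
      using n xi_K[OF y] Vs_lim_xi[OF y] by auto
  qed
qed

end

theorem theorem4p2:
  fixes H :: "'a chs" and S T :: "real \<Rightarrow> 'a \<Rightarrow> 'a"
  assumes "complex_hilbert_space H"
    and "sc_isometry_semigroup H S"
    and "sc_isometry_semigroup H T"
    and "\<forall>l\<ge>0. \<forall>m\<ge>0. \<forall>x\<in>carrier H.
           S l (T m x) = smult H (exp (\<i> * complex_of_real (l * m))) (T m (S l x))"
  shows "\<exists>(K :: (real \<times> real \<Rightarrow> 'a) chs) (J :: 'a \<Rightarrow> (real \<times> real \<Rightarrow> 'a)) U V.
           complex_hilbert_space K
         \<and> isometry H K J
         \<and> sc_unitary_group K U
         \<and> sc_unitary_group K V
         \<and> (\<forall>l m. \<forall>v\<in>carrier K.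
              U l (V m v) = smult K (exp (\<i> * complex_of_real (l * m))) (V m (U l v)))
         \<and> (\<forall>l\<ge>0. \<forall>x\<in>carrier H. orth_proj K (J ` carrier H) (U l (J x)) = J (S l x))
         \<and> (\<forall>m\<ge>0. \<forall>x\<in>carrier H. orth_proj K (J ` carrier H) (V m (J x)) = J (T m x))"
proof -
  interpret dil H S T
    by (unfold_locales) (use assms in auto)
  show ?thesis
  proof (intro exI conjI)
    show "complex_hilbert_space Kr" by (rule Kr_hilbert)
    show "isometry H Kr Jf" by (rule Jf_iso)
    show "sc_unitary_group Kr Us" by (rule Us_group)
    show "sc_unitary_group Kr Vs" by (rule Vs_group)
    show "\<forall>l m. \<forall>v\<in>carrier Kr. Us l (Vs m v) = smult Kr (exp (\<i> * complex_of_real (l * m))) (Vs m (Us l v))"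
      using UV_weyl by (simp add: ph_def)
    show "\<forall>l\<ge>0. \<forall>x\<in>carrier H. orth_proj Kr (Jf ` carrier H) (Us l (Jf x)) = Jf (S l x)"
      by (simp add: UJ orth_proj_self)
    show "\<forall>m\<ge>0. \<forall>x\<in>carrier H. orth_proj Kr (Jf ` carrier H) (Vs m (Jf x)) = Jf (T m x)"
      by (simp add: VJ orth_proj_self)
  qed
qed

end
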